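(* Let $(X,d)$ be a Polish metric space, let $1\le p<\infty$, and let $\{m_x\}_{x\in X}$ be a random walk on $X$ with $m_x\in\mathcal{P}_p(X)$ for every $x\in X$. Define $\tilde m:\mathcal{P}_p(X)\to\mathcal{P}(\mathcal{P}_p(X))$ by $$\int_{\mathcal{P}_p(X)} f(\sigma)\,\tilde m_\mu(d\sigma)=\int_X f(m_x)\,\mu(dx)\qquad\text{for all } f\in\mathcal{C}_b(\mathcal{P}_p(X)),$$ i.e. $\tilde m_\mu$ is the push-forward of $\mu$ under $x\mapsto m_x$. Then $\{\tilde m_\mu\}_{\mu\in\mathcal{P}_p(X)}$ is a random walk on the metric space $(\mathcal{P}_p(X),W_p)$ and $$\inf_{x,y\in X,\ x\neq y}\kappa^m_p(x,y)=\inf_{\mu,\nu\in\mathcal{P}_p(X),\ \mu\ne\nu}\kappa^{\tilde m}_p(\mu,\nu),$$ where, if one side is $-\infty$, so is the other.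
   Context: A random walk on a metric space $Y$ is a family $\{m_y\}_{y\in Y}$ of Borel probability measures on $Y$. $\mathcal{P}(Y)$ denotes the Borel probability measures on $Y$ with the weak topology. For $1\le p<\infty$, $\mathcal{P}_p(Y)=\{\mu\in\mathcal{P}(Y): \int d(o,y)^p\,\mu(dy)<\infty \text{ for some } o\in Y\}$, and the $L^p$-Wasserstein distance is $W_p(\mu,\nu)=\inf_{\pi}\big(\int d(x,y)^p\,\pi(dx,dy)\big)^{1/p}$, the infimum over couplings $\pi$ of $\mu$ and $\nu$ (probability measures on $Y\times Y$ with marginals $\mu,\nu$). $(\mathcal{P}_p(Y),W_p)$ is a Polish metric space when $Y$ is. For a random walk $\{m_y\}$ on $Y$ and distinct $x,y\in Y$, the $p$-coarse Ricci curvature is $\kappa^m_p(x,y)=1-W_p(m_x,m_y)/d(x,y)$. $\mathcal{C}_b$ denotes bounded continuous functions. *)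

theory Defs
  imports "HOL-Analysis.Analysis" "HOL-Probability.Probability"
begin

definition borel_of :: "'a topology \<Rightarrow> 'a measure" where
  "borel_of T = sigma (topspace T) {U. openin T U}"

definition mborel :: "'a set \<Rightarrow> ('a \<Rightarrow> 'a \<Rightarrow> real) \<Rightarrow> 'a measure" where
  "mborel M d = borel_of (Metric_space.mtopology M d)"

definition Pp :: "real \<Rightarrow> 'a set \<Rightarrow> ('a \<Rightarrow> 'a \<Rightarrow> real) \<Rightarrow> 'a measure set" where
  "Pp p M d = {\<mu>. prob_space \<mu> \<and> sets \<mu> = sets (mborel M d) \<and>
      (\<exists>z\<in>M. (\<integral>\<^sup>+ y. ennreal (d z y powr p) \<partial>\<mu>) < \<infinity>)}"

definition couplings :: "'a set \<Rightarrow> ('a \<Rightarrow> 'a \<Rightarrow> real) \<Rightarrow> 'a measure \<Rightarrow> 'a measure \<Rightarrow> ('a \<times> 'a) measure set" where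
  "couplings M d \<mu> \<nu> = {\<pi>. sets \<pi> = sets (mborel M d \<Otimes>\<^sub>M mborel M d) \<and>
      distr \<pi> (mborel M d) fst = \<mu> \<and> distr \<pi> (mborel M d) snd = \<nu>}"

definition wcost :: "real \<Rightarrow> 'a set \<Rightarrow> ('a \<Rightarrow> 'a \<Rightarrow> real) \<Rightarrow> 'a measure \<Rightarrow> 'a measure \<Rightarrow> ennreal" where
  "wcost p M d \<mu> \<nu> = (INF \<pi>\<in>couplings M d \<mu> \<nu>. \<integral>\<^sup>+ z. ennreal (d (fst z) (snd z) powr p) \<partial>\<pi>)"

definition wass_e :: "real \<Rightarrow> 'a set \<Rightarrow> ('a \<Rightarrow> 'a \<Rightarrow> real) \<Rightarrow> 'a measure \<Rightarrow> 'a measure \<Rightarrow> ereal" where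
  "wass_e p M d \<mu> \<nu> = (if wcost p M d \<mu> \<nu> = \<infinity> then \<infinity>
      else ereal (enn2real (wcost p M d \<mu> \<nu>) powr (1 / p)))"

text \<open>Real-valued W_p (finite on P_p), used as the metric on P_p.\<close>
definition wass :: "real \<Rightarrow> 'a set \<Rightarrow> ('a \<Rightarrow> 'a \<Rightarrow> real) \<Rightarrow> 'a measure \<Rightarrow> 'a measure \<Rightarrow> real" where
  "wass p M d \<mu> \<nu> = real_of_ereal (wass_e p M d \<mu> \<nu>)"

definition kappa :: "real \<Rightarrow> 'a set \<Rightarrow> ('a \<Rightarrow> 'a \<Rightarrow> real) \<Rightarrow> ('a \<Rightarrow> 'a measure) \<Rightarrow> 'a \<Rightarrow> 'a \<Rightarrow> ereal" where
  "kappa p M d m x y = 1 - wass_e p M d (m x) (m y) / ereal (d x y)"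

definition lift_walk :: "real \<Rightarrow> ('a::metric_space \<Rightarrow> 'a measure) \<Rightarrow> 'a measure \<Rightarrow> 'a measure measure" where
  "lift_walk p m \<mu> = distr \<mu> (mborel (Pp p UNIV dist) (wass p UNIV dist)) m"

end

theory Submission
  imports Defs
begin
lemma mborel_UNIV: "mborel UNIV dist = (borel :: 'a::metric_space measure)"
  unfolding mborel_def borel_of_def borel_def by simp

lemma (in Metric_space) opens_Pow: "Collect (openin mtopology) \<subseteq> Pow M"
  using openin_subset by fastforce

lemma (in Metric_space) space_mborel: "space (mborel M d) = M"
  unfolding mborel_def borel_of_def topspace_mtopology
  by (rule space_measure_of[OF opens_Pow])

lemma (in Metric_space) sets_mborel: "sets (mborel M d) = sigma_sets M {U. openin mtopology U}"
  unfolding mborel_def borel_of_def topspace_mtopology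
  using sets_measure_of[OF opens_Pow] by simp

lemma (in Metric_space) singleton_mborel: "a \<in> M \<Longrightarrow> {a} \<in> sets (mborel M d)"
proof -
  assume a: "a \<in> M"
  have "closedin mtopology (mcball a 0)" by simp
  moreover have "mcball a 0 = {a}" using a by (auto simp: mcball_def) (metis antisym nonneg zero)
  ultimately have "openin mtopology (M - {a})" by (simp add: closedin_def)
  hence "M - (M - {a}) \<in> sigma_sets M {U. openin mtopology U}"
    by (intro sigma_sets.Compl sigma_sets.Basic) auto
  with a show ?thesis by (simp add: sets_mborel Diff_Diff_Int Int_absorb1)
qed

lemma nn_integral_distr_le:
  assumes T: "T \<in> measurable M N"
  shows "(\<integral>\<^sup>+ y. g y \<partial>distr M N T) \<le> (\<integral>\<^sup>+ x. g (T x) \<partial>M)"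
proof -
  have "(\<integral>\<^sup>+ y. g y \<partial>distr M N T) = (SUP s \<in> {s. simple_function (distr M N T) s \<and> s \<le> g}. integral\<^sup>S (distr M N T) s)"
    by (rule nn_integral_def)
  also have "\<dots> \<le> (\<integral>\<^sup>+ x. g (T x) \<partial>M)"
  proof (rule SUP_least)
    fix s assume s: "s \<in> {s. simple_function (distr M N T) s \<and> s \<le> g}"
    then have sm: "s \<in> borel_measurable (distr M N T)" using borel_measurable_simple_function by blast
    have "integral\<^sup>S (distr M N T) s = integral\<^sup>N (distr M N T) s"
      using s by (simp add: nn_integral_eq_simple_integral)
    also have "\<dots> = (\<integral>\<^sup>+ x. s (T x) \<partial>M)" by (rule nn_integral_distr[OF T sm])
    also have "\<dots> \<le> (\<integral>\<^sup>+ x. g (T x) \<partial>M)" using s by (auto intro!: nn_integral_mono simp: le_fun_def)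
    finally show "integral\<^sup>S (distr M N T) s \<le> (\<integral>\<^sup>+ x. g (T x) \<partial>M)" .
  qed
  finally show ?thesis .
qed

lemma Pp_D:
  fixes \<mu> :: "'a::polish_space measure"
  assumes "\<mu> \<in> Pp p UNIV dist"
  shows "prob_space \<mu>" "sets \<mu> = sets borel" "space \<mu> = UNIV"
    and "\<exists>z. (\<integral>\<^sup>+ y. ennreal (dist z y powr p) \<partial>\<mu>) < \<infinity>"
  using assms by (auto simp: Pp_def mborel_UNIV dest: sets_eq_imp_space_eq)

lemma couplings_UNIV: "couplings UNIV dist \<mu> \<nu> = {\<pi>. sets \<pi> = sets (borel \<Otimes>\<^sub>M borel) \<and>
      distr \<pi> borel fst = \<mu> \<and> distr \<pi> borel snd = (\<nu> :: 'a::metric_space measure)}"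
  by (simp add: couplings_def mborel_UNIV)

lemma coupD:
  fixes \<mu> \<nu> :: "'a::polish_space measure"
  assumes "\<pi> \<in> couplings UNIV dist \<mu> \<nu>"
  shows "sets \<pi> = sets (borel \<Otimes>\<^sub>M borel)" "sets \<pi> = sets borel" "space \<pi> = UNIV"
    "distr \<pi> borel fst = \<mu>" "distr \<pi> borel snd = \<nu>"
proof -
  have a: "sets \<pi> = sets (borel \<Otimes>\<^sub>M borel)" "distr \<pi> borel fst = \<mu>" "distr \<pi> borel snd = \<nu>"
    using assms unfolding couplings_UNIV by auto
  have b: "sets \<pi> = sets borel" using a(1) by (simp only: borel_prod)
  have "space \<pi> = space (borel :: ('a \<times> 'a) measure)" by (rule sets_eq_imp_space_eq[OF b])
  then show "sets \<pi> = sets (borel \<Otimes>\<^sub>M borel)" "sets \<pi> = sets borel" "space \<pi> = UNIV"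
    "distr \<pi> borel fst = \<mu>" "distr \<pi> borel snd = \<nu>" using a b by auto
qed

lemma coup_meas:
  fixes \<mu> \<nu> :: "'a::polish_space measure"
  assumes "\<pi> \<in> couplings UNIV dist \<mu> \<nu>" "f \<in> measurable (borel \<Otimes>\<^sub>M borel) N"
  shows "f \<in> measurable \<pi> N"
  using assms(2) measurable_cong_sets[OF coupD(1)[OF assms(1)] refl, of N] by simp

lemma coup_int_fst:
  fixes \<mu> \<nu> :: "'a::polish_space measure"
  assumes "\<pi> \<in> couplings UNIV dist \<mu> \<nu>" "g \<in> borel_measurable borel"
  shows "(\<integral>\<^sup>+ z. g (fst z) \<partial>\<pi>) = (\<integral>\<^sup>+ x. g x \<partial>\<mu>)"
proof -
  have "(\<integral>\<^sup>+ x. g x \<partial>\<mu>) = (\<integral>\<^sup>+ x. g x \<partial>distr \<pi> borel fst)" using coupD(4)[OF assms(1)] by simp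
  also have "\<dots> = (\<integral>\<^sup>+ z. g (fst z) \<partial>\<pi>)"
    by (rule nn_integral_distr) (auto intro: coup_meas[OF assms(1)] simp: assms(2))
  finally show ?thesis ..
qed

lemma coup_int_snd:
  fixes \<mu> \<nu> :: "'a::polish_space measure"
  assumes "\<pi> \<in> couplings UNIV dist \<mu> \<nu>" "g \<in> borel_measurable borel"
  shows "(\<integral>\<^sup>+ z. g (snd z) \<partial>\<pi>) = (\<integral>\<^sup>+ x. g x \<partial>\<nu>)"
proof -
  have "(\<integral>\<^sup>+ x. g x \<partial>\<nu>) = (\<integral>\<^sup>+ x. g x \<partial>distr \<pi> borel snd)" using coupD(5)[OF assms(1)] by simp
  also have "\<dots> = (\<integral>\<^sup>+ z. g (snd z) \<partial>\<pi>)"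
    by (rule nn_integral_distr) (auto intro: coup_meas[OF assms(1)] simp: assms(2))
  finally show ?thesis ..
qed

lemma coup_space1:
  fixes \<mu> \<nu> :: "'a::polish_space measure"
  assumes "\<pi> \<in> couplings UNIV dist \<mu> \<nu>" "\<mu> \<in> Pp p UNIV dist"
  shows "emeasure \<pi> UNIV = 1"
proof -
  have "emeasure \<pi> UNIV = emeasure (distr \<pi> borel fst) UNIV"
    by (subst emeasure_distr) (auto intro: coup_meas[OF assms(1)] simp: coupD(3)[OF assms(1)])
  also have "\<dots> = emeasure \<mu> (space \<mu>)" using coupD(4)[OF assms(1)] Pp_D(3)[OF assms(2)] by simp
  also have "\<dots> = 1" using prob_space.emeasure_space_1[OF Pp_D(1)[OF assms(2)]] .
  finally show ?thesis .
qed

lemma coup_prob: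
  fixes \<mu> \<nu> :: "'a::polish_space measure"
  assumes "\<pi> \<in> couplings UNIV dist \<mu> \<nu>" "\<mu> \<in> Pp p UNIV dist"
  shows "prob_space \<pi>"
  by (rule prob_spaceI) (simp add: coupD(3)[OF assms(1)] coup_space1[OF assms])

lemma prod_coup:
  fixes \<mu> \<nu> :: "'a::polish_space measure"
  assumes \<mu>: "\<mu> \<in> Pp p UNIV dist" and \<nu>: "\<nu> \<in> Pp p UNIV dist"
  shows "\<mu> \<Otimes>\<^sub>M \<nu> \<in> couplings UNIV dist \<mu> \<nu>"
proof -
  interpret M: prob_space \<mu> by (rule Pp_D(1)[OF \<mu>])
  interpret N: prob_space \<nu> by (rule Pp_D(1)[OF \<nu>])
  interpret pair_prob_space \<mu> \<nu> ..
  have s: "sets (\<mu> \<Otimes>\<^sub>M \<nu>) = sets (borel \<Otimes>\<^sub>M borel)"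
    by (rule sets_pair_measure_cong) (simp_all add: Pp_D(2)[OF \<mu>] Pp_D(2)[OF \<nu>])
  have "distr (\<mu> \<Otimes>\<^sub>M \<nu>) borel fst = \<mu>"
  proof (rule measure_eqI)
    fix A assume A: "A \<in> sets (distr (\<mu> \<Otimes>\<^sub>M \<nu>) borel fst)"
    hence A': "A \<in> sets \<mu>" by (simp add: Pp_D(2)[OF \<mu>])
    have "fst -` A \<inter> space (\<mu> \<Otimes>\<^sub>M \<nu>) = A \<times> space \<nu>"
      by (auto simp: space_pair_measure Pp_D(3)[OF \<mu>] Pp_D(3)[OF \<nu>])
    then show "emeasure (distr (\<mu> \<Otimes>\<^sub>M \<nu>) borel fst) A = emeasure \<mu> A"
      using A A' N.emeasure_pair_measure_Times[OF A' sets.top[of \<nu>]] N.emeasure_space_1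
      by (subst emeasure_distr) (auto simp: measurable_cong_sets[OF s refl])
  qed (simp add: Pp_D(2)[OF \<mu>])
  moreover have "distr (\<mu> \<Otimes>\<^sub>M \<nu>) borel snd = \<nu>"
  proof (rule measure_eqI)
    fix A assume A: "A \<in> sets (distr (\<mu> \<Otimes>\<^sub>M \<nu>) borel snd)"
    hence A': "A \<in> sets \<nu>" by (simp add: Pp_D(2)[OF \<nu>])
    have "snd -` A \<inter> space (\<mu> \<Otimes>\<^sub>M \<nu>) = space \<mu> \<times> A"
      by (auto simp: space_pair_measure Pp_D(3)[OF \<mu>] Pp_D(3)[OF \<nu>])
    then show "emeasure (distr (\<mu> \<Otimes>\<^sub>M \<nu>) borel snd) A = emeasure \<nu> A"
      using A A' N.emeasure_pair_measure_Times[OF sets.top[of \<mu>] A'] M.emeasure_space_1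
      by (subst emeasure_distr) (auto simp: measurable_cong_sets[OF s refl])
  qed (simp add: Pp_D(2)[OF \<nu>])
  ultimately show ?thesis using s by (simp add: couplings_UNIV)
qed

lemma pow3:
  fixes a b c p :: real
  assumes "0 \<le> a" "0 \<le> b" "0 \<le> c" "0 < p"
  shows "(a + b + c) powr p \<le> 3 powr p * (a powr p + b powr p + c powr p)"
proof -
  define m where "m = max a (max b c)"
  have "a + b + c \<le> 3 * m" unfolding m_def by linarith
  hence "(a + b + c) powr p \<le> (3 * m) powr p" using assms by (intro powr_mono2) auto
  also have "\<dots> = 3 powr p * m powr p" using assms unfolding m_def by (subst powr_mult) auto
  also have "m powr p \<le> a powr p + b powr p + c powr p"
  proof -
    have "m = a \<or> m = b \<or> m = c" unfolding m_def by linarith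
    moreover have "0 \<le> a powr p" "0 \<le> b powr p" "0 \<le> c powr p" by auto
    ultimately show ?thesis by (smt (verit))
  qed
  hence "3 powr p * m powr p \<le> 3 powr p * (a powr p + b powr p + c powr p)" by simp
  finally show ?thesis .
qed

lemma coup_cost_fin:
  fixes \<mu> \<nu> :: "'a::polish_space measure"
  assumes \<pi>: "\<pi> \<in> couplings UNIV dist \<mu> \<nu>" and \<mu>: "\<mu> \<in> Pp p UNIV dist" and \<nu>: "\<nu> \<in> Pp p UNIV dist"
    and p: "1 \<le> p"
  shows "(\<integral>\<^sup>+ z. ennreal (dist (fst z) (snd z) powr p) \<partial>\<pi>) < \<infinity>"
proof -
  obtain z1 where z1: "(\<integral>\<^sup>+ y. ennreal (dist z1 y powr p) \<partial>\<mu>) < \<infinity>" using Pp_D(4)[OF \<mu>] by blast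
  obtain z2 where z2: "(\<integral>\<^sup>+ y. ennreal (dist z2 y powr p) \<partial>\<nu>) < \<infinity>" using Pp_D(4)[OF \<nu>] by blast
  interpret prob_space \<pi> by (rule coup_prob[OF \<pi> \<mu>])
  have m1: "(\<lambda>z. ennreal (dist z1 (fst z) powr p)) \<in> borel_measurable \<pi>"
    by (rule coup_meas[OF \<pi>]) measurable
  have m2: "(\<lambda>z. ennreal (dist z2 (snd z) powr p)) \<in> borel_measurable \<pi>"
    by (rule coup_meas[OF \<pi>]) measurable
  have "(\<integral>\<^sup>+ z. ennreal (dist (fst z) (snd z) powr p) \<partial>\<pi>) \<le>
     (\<integral>\<^sup>+ z. ennreal (3 powr p) * ((ennreal (dist z1 (fst z) powr p) + ennreal (dist z1 z2 powr p)) + ennreal (dist z2 (snd z) powr p)) \<partial>\<pi>)"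
  proof (rule nn_integral_mono)
    fix z :: "'a \<times> 'a"
    have t1: "dist (fst z) (snd z) \<le> dist (fst z) z1 + dist z1 (snd z)" by (rule dist_triangle)
    have t2: "dist z1 (snd z) \<le> dist z1 z2 + dist z2 (snd z)" by (rule dist_triangle)
    have "dist (fst z) (snd z) \<le> dist z1 (fst z) + dist z1 z2 + dist z2 (snd z)"
      using t1 t2 dist_commute[of "fst z" z1] by linarith
    hence "dist (fst z) (snd z) powr p \<le> (dist z1 (fst z) + dist z1 z2 + dist z2 (snd z)) powr p"
      using p by (intro powr_mono2) auto
    also have "\<dots> \<le> 3 powr p * (dist z1 (fst z) powr p + dist z1 z2 powr p + dist z2 (snd z) powr p)"
      using p by (intro pow3) auto
    finally show "ennreal (dist (fst z) (snd z) powr p) \<le> ennreal (3 powr p) * ((ennreal (dist z1 (fst z) powr p) + ennreal (dist z1 z2 powr p)) + ennreal (dist z2 (snd z) powr p))"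
      by (simp add: ennreal_mult[symmetric] ennreal_plus[symmetric] del: ennreal_plus)
  qed
  also have "\<dots> = ennreal (3 powr p) * (((\<integral>\<^sup>+ z. ennreal (dist z1 (fst z) powr p) \<partial>\<pi>) + (\<integral>\<^sup>+ z. ennreal (dist z1 z2 powr p) \<partial>\<pi>)) + (\<integral>\<^sup>+ z. ennreal (dist z2 (snd z) powr p) \<partial>\<pi>))"
    using m1 m2 by (simp add: nn_integral_cmult nn_integral_add)
  also have "\<dots> < \<infinity>"
  proof -
    have i1: "(\<integral>\<^sup>+ z. ennreal (dist z1 (fst z) powr p) \<partial>\<pi>) = (\<integral>\<^sup>+ y. ennreal (dist z1 y powr p) \<partial>\<mu>)"
      by (rule coup_int_fst[OF \<pi>]) measurable
    have i2: "(\<integral>\<^sup>+ z. ennreal (dist z2 (snd z) powr p) \<partial>\<pi>) = (\<integral>\<^sup>+ y. ennreal (dist z2 y powr p) \<partial>\<nu>)"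
      by (rule coup_int_snd[OF \<pi>]) measurable
    have i3: "(\<integral>\<^sup>+ z. ennreal (dist z1 z2 powr p) \<partial>\<pi>) = ennreal (dist z1 z2 powr p)"
      by (simp add: emeasure_space_1)
    show ?thesis unfolding i1 i2 i3 using z1 z2 by (simp add: ennreal_mult_less_top)
  qed
  finally show ?thesis .
qed

lemma wcost_fin:
  fixes \<mu> \<nu> :: "'a::polish_space measure"
  assumes \<mu>: "\<mu> \<in> Pp p UNIV dist" and \<nu>: "\<nu> \<in> Pp p UNIV dist" and p: "1 \<le> p"
  shows "wcost p UNIV dist \<mu> \<nu> < \<infinity>"
proof -
  have "wcost p UNIV dist \<mu> \<nu> \<le> (\<integral>\<^sup>+ z. ennreal (dist (fst z) (snd z) powr p) \<partial>(\<mu> \<Otimes>\<^sub>M \<nu>))"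
    unfolding wcost_def by (rule INF_lower) (rule prod_coup[OF \<mu> \<nu>])
  also have "\<dots> < \<infinity>" by (rule coup_cost_fin[OF prod_coup[OF \<mu> \<nu>] \<mu> \<nu> p])
  finally show ?thesis .
qed

lemma wcost_diag:
  fixes \<mu> :: "'a::polish_space measure"
  assumes \<mu>: "\<mu> \<in> Pp p UNIV dist"
  shows "wcost p UNIV dist \<mu> \<mu> = 0"
proof -
  define \<pi> where "\<pi> = distr \<mu> (borel \<Otimes>\<^sub>M borel) (\<lambda>x. (x, x))"
  have T0: "(\<lambda>x::'a. (x, x)) \<in> measurable borel (borel \<Otimes>\<^sub>M borel)" by measurable
  have T: "(\<lambda>x. (x, x)) \<in> measurable \<mu> (borel \<Otimes>\<^sub>M borel)"
    by (subst measurable_cong_sets[OF Pp_D(2)[OF \<mu>] refl]) (rule T0)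
  have "distr \<pi> borel fst = distr \<mu> borel (fst \<circ> (\<lambda>x. (x, x)))"
    unfolding \<pi>_def by (rule distr_distr[OF _ T]) simp
  also have "\<dots> = distr \<mu> borel (\<lambda>x. x)" by (simp add: comp_def)
  also have "\<dots> = \<mu>" by (rule distr_id2) (simp add: Pp_D(2)[OF \<mu>])
  finally have 1: "distr \<pi> borel fst = \<mu>" .
  have "distr \<pi> borel snd = distr \<mu> borel (snd \<circ> (\<lambda>x. (x, x)))"
    unfolding \<pi>_def by (rule distr_distr[OF _ T]) simp
  also have "\<dots> = distr \<mu> borel (\<lambda>x. x)" by (simp add: comp_def)
  also have "\<dots> = \<mu>" by (rule distr_id2) (simp add: Pp_D(2)[OF \<mu>])
  finally have 2: "distr \<pi> borel snd = \<mu>" .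
  note 1 2
  hence c: "\<pi> \<in> couplings UNIV dist \<mu> \<mu>" by (simp add: couplings_UNIV \<pi>_def)
  have "wcost p UNIV dist \<mu> \<mu> \<le> (\<integral>\<^sup>+ z. ennreal (dist (fst z) (snd z) powr p) \<partial>\<pi>)"
    unfolding wcost_def by (rule INF_lower) (rule c)
  also have "\<dots> \<le> (\<integral>\<^sup>+ x. ennreal (dist (fst (x, x)) (snd (x, x)) powr p) \<partial>\<mu>)"
    unfolding \<pi>_def by (rule nn_integral_distr_le[OF T])
  also have "\<dots> = 0" by simp
  finally show ?thesis by simp
qed

lemma wcost_sym_le:
  fixes \<mu> \<nu> :: "'a::polish_space measure"
  shows "wcost p UNIV dist \<mu> \<nu> \<le> wcost p UNIV dist \<nu> \<mu>"
  unfolding wcost_def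
proof (rule INF_greatest)
  fix \<pi> assume \<pi>: "\<pi> \<in> couplings UNIV dist \<nu> \<mu>"
  define \<pi>' where "\<pi>' = distr \<pi> (borel \<Otimes>\<^sub>M borel) (\<lambda>z. (snd z, fst z))"
  have T: "(\<lambda>z. (snd z, fst z)) \<in> measurable \<pi> (borel \<Otimes>\<^sub>M borel)"
    by (rule coup_meas[OF \<pi>]) simp
  have "distr \<pi>' borel fst = distr \<pi> borel (fst \<circ> (\<lambda>z. (snd z, fst z)))"
    unfolding \<pi>'_def by (rule distr_distr[OF _ T]) simp
  also have "\<dots> = \<mu>" using coupD(5)[OF \<pi>] by (simp add: comp_def)
  finally have 1: "distr \<pi>' borel fst = \<mu>" .
  have "distr \<pi>' borel snd = distr \<pi> borel (snd \<circ> (\<lambda>z. (snd z, fst z)))"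
    unfolding \<pi>'_def by (rule distr_distr[OF _ T]) simp
  also have "\<dots> = \<nu>" using coupD(4)[OF \<pi>] by (simp add: comp_def)
  finally have 2: "distr \<pi>' borel snd = \<nu>" .
  note 1 2
  hence c: "\<pi>' \<in> couplings UNIV dist \<mu> \<nu>" by (simp add: couplings_UNIV \<pi>'_def)
  have "(INF \<pi>\<in>couplings UNIV dist \<mu> \<nu>. \<integral>\<^sup>+ z. ennreal (dist (fst z) (snd z) powr p) \<partial>\<pi>)
      \<le> (\<integral>\<^sup>+ z. ennreal (dist (fst z) (snd z) powr p) \<partial>\<pi>')"
    by (rule INF_lower) (rule c)
  also have "\<dots> \<le> (\<integral>\<^sup>+ z. ennreal (dist (fst (snd z, fst z)) (snd (snd z, fst z)) powr p) \<partial>\<pi>)"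
    unfolding \<pi>'_def by (rule nn_integral_distr_le[OF T])
  also have "\<dots> = (\<integral>\<^sup>+ z. ennreal (dist (snd z) (fst z) powr p) \<partial>\<pi>)" by simp
  also have "\<dots> = (\<integral>\<^sup>+ z. ennreal (dist (fst z) (snd z) powr p) \<partial>\<pi>)"
    by (simp add: dist_commute)
  finally show "(INF \<pi>\<in>couplings UNIV dist \<mu> \<nu>. \<integral>\<^sup>+ z. ennreal (dist (fst z) (snd z) powr p) \<partial>\<pi>)
      \<le> (\<integral>\<^sup>+ z. ennreal (dist (fst z) (snd z) powr p) \<partial>\<pi>)" .
qed

lemma wcost_sym:
  fixes \<mu> \<nu> :: "'a::polish_space measure"
  shows "wcost p UNIV dist \<mu> \<nu> = wcost p UNIV dist \<nu> \<mu>"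
  by (intro antisym wcost_sym_le)

lemma wass_e_nonneg: "0 \<le> wass_e p M d \<mu> \<nu>"
  unfolding wass_e_def by simp

lemma wass_nonneg: "0 \<le> wass p M d \<mu> \<nu>"
  unfolding wass_def wass_e_def by simp

lemma wass_sym:
  fixes \<mu> \<nu> :: "'a::polish_space measure"
  shows "wass p UNIV dist \<mu> \<nu> = wass p UNIV dist \<nu> \<mu>"
  unfolding wass_def wass_e_def by (simp add: wcost_sym)

lemma wass_Pp:
  fixes \<mu> \<nu> :: "'a::polish_space measure"
  assumes \<mu>: "\<mu> \<in> Pp p UNIV dist" and \<nu>: "\<nu> \<in> Pp p UNIV dist" and p: "1 \<le> p"
  shows "wass_e p UNIV dist \<mu> \<nu> = ereal (wass p UNIV dist \<mu> \<nu>)"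
    "wass p UNIV dist \<mu> \<nu> = enn2real (wcost p UNIV dist \<mu> \<nu>) powr (1 / p)"
  using wcost_fin[OF \<mu> \<nu> p] unfolding wass_def wass_e_def by auto

lemma wass_self:
  fixes \<mu> :: "'a::polish_space measure"
  assumes \<mu>: "\<mu> \<in> Pp p UNIV dist"
  shows "wass p UNIV dist \<mu> \<mu> = 0"
  unfolding wass_def wass_e_def by (simp add: wcost_diag[OF \<mu>])

lemma wass_eq0:
  fixes \<mu> \<nu> :: "'a::polish_space measure"
  assumes \<mu>: "\<mu> \<in> Pp p UNIV dist" and \<nu>: "\<nu> \<in> Pp p UNIV dist" and p: "1 \<le> p"
    and "wass p UNIV dist \<mu> \<nu> = 0"
  shows "wcost p UNIV dist \<mu> \<nu> = 0"
  using assms(4) wcost_fin[OF \<mu> \<nu> p] by (auto simp: wass_Pp(2)[OF \<mu> \<nu> p] enn2real_eq_0_iff)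

lemma pos_core:
  fixes \<pi> :: "('a::metric_space \<times> 'a) measure"
  assumes P: "prob_space \<pi>" and s: "sets \<pi> = sets borel" and F: "closed F" and d: "0 < \<delta>"
  shows "measure \<pi> (F \<times> UNIV) \<le> measure \<pi> (UNIV \<times> {y. infdist y F < \<delta>}) + measure \<pi> {z. \<delta> \<le> dist (fst z) (snd z)}"
    "measure \<pi> (UNIV \<times> F) \<le> measure \<pi> ({y. infdist y F < \<delta>} \<times> UNIV) + measure \<pi> {z. \<delta> \<le> dist (fst z) (snd z)}"
proof -
  interpret prob_space \<pi> by (rule P)
  have o: "open {y. infdist y F < \<delta>}"
    by (rule open_Collect_less) (auto intro!: continuous_intros)
  have c: "closed {z::'a\<times>'a. \<delta> \<le> dist (fst z) (snd z)}"
    by (rule closed_Collect_le) (auto intro!: continuous_intros)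
  have m1: "UNIV \<times> {y. infdist y F < \<delta>} \<in> sets \<pi>" "{y. infdist y F < \<delta>} \<times> UNIV \<in> sets \<pi>"
    unfolding s using o by (auto intro!: borel_open open_Times)
  have m2: "{z::'a\<times>'a. \<delta> \<le> dist (fst z) (snd z)} \<in> sets \<pi>"
    unfolding s using c by (rule borel_closed)
  have sub1: "F \<times> UNIV \<subseteq> (UNIV \<times> {y. infdist y F < \<delta>}) \<union> {z. \<delta> \<le> dist (fst z) (snd z)}"
  proof
    fix z :: "'a \<times> 'a" assume "z \<in> F \<times> UNIV"
    then have "fst z \<in> F" by auto
    hence "infdist (snd z) F \<le> dist (snd z) (fst z)" by (rule infdist_le)
    then show "z \<in> (UNIV \<times> {y. infdist y F < \<delta>}) \<union> {z. \<delta> \<le> dist (fst z) (snd z)}"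
      by (cases z) (auto simp: dist_commute)
  qed
  have sub2: "UNIV \<times> F \<subseteq> ({y. infdist y F < \<delta>} \<times> UNIV) \<union> {z. \<delta> \<le> dist (fst z) (snd z)}"
  proof
    fix z :: "'a \<times> 'a" assume "z \<in> UNIV \<times> F"
    then have "snd z \<in> F" by auto
    hence "infdist (fst z) F \<le> dist (fst z) (snd z)" by (rule infdist_le)
    then show "z \<in> ({y. infdist y F < \<delta>} \<times> UNIV) \<union> {z. \<delta> \<le> dist (fst z) (snd z)}"
      by (cases z) auto
  qed
  show "measure \<pi> (F \<times> UNIV) \<le> measure \<pi> (UNIV \<times> {y. infdist y F < \<delta>}) + measure \<pi> {z. \<delta> \<le> dist (fst z) (snd z)}"
    using finite_measure_mono[OF sub1] measure_Un_le[OF m1(1) m2] m1 m2 by auto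
  show "measure \<pi> (UNIV \<times> F) \<le> measure \<pi> ({y. infdist y F < \<delta>} \<times> UNIV) + measure \<pi> {z. \<delta> \<le> dist (fst z) (snd z)}"
    using finite_measure_mono[OF sub2] measure_Un_le[OF m1(2) m2] m1 m2 by auto
qed

lemma coup_measure:
  fixes \<mu> \<nu> :: "'a::polish_space measure"
  assumes \<pi>: "\<pi> \<in> couplings UNIV dist \<mu> \<nu>" and A: "A \<in> sets borel"
  shows "measure \<mu> A = measure \<pi> (A \<times> UNIV)" "measure \<nu> A = measure \<pi> (UNIV \<times> A)"
proof -
  have "measure \<mu> A = measure (distr \<pi> borel fst) A" using coupD(4)[OF \<pi>] by simp
  also have "\<dots> = measure \<pi> (fst -` A \<inter> space \<pi>)"
    by (rule measure_distr[OF _ A]) (rule coup_meas[OF \<pi>], simp)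
  also have "fst -` A \<inter> space \<pi> = A \<times> UNIV" using coupD(3)[OF \<pi>] by auto
  finally show "measure \<mu> A = measure \<pi> (A \<times> UNIV)" .
  have "measure \<nu> A = measure (distr \<pi> borel snd) A" using coupD(5)[OF \<pi>] by simp
  also have "\<dots> = measure \<pi> (snd -` A \<inter> space \<pi>)"
    by (rule measure_distr[OF _ A]) (rule coup_meas[OF \<pi>], simp)
  also have "snd -` A \<inter> space \<pi> = UNIV \<times> A" using coupD(3)[OF \<pi>] by auto
  finally show "measure \<nu> A = measure \<pi> (UNIV \<times> A)" .
qed

lemma coup_markov:
  fixes \<mu> \<nu> :: "'a::polish_space measure"
  assumes \<pi>: "\<pi> \<in> couplings UNIV dist \<mu> \<nu>" and \<mu>: "\<mu> \<in> Pp p UNIV dist" and d: "0 < \<delta>" and p: "1 \<le> p"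
    and c: "(\<integral>\<^sup>+ z. ennreal (dist (fst z) (snd z) powr p) \<partial>\<pi>) < ennreal \<epsilon>"
  shows "measure \<pi> {z. \<delta> \<le> dist (fst z) (snd z)} \<le> \<epsilon> / \<delta> powr p"
proof -
  interpret prob_space \<pi> by (rule coup_prob[OF \<pi> \<mu>])
  define S where "S = {z::'a\<times>'a. \<delta> \<le> dist (fst z) (snd z)}"
  have c0: "closed S" unfolding S_def
    by (rule closed_Collect_le) (auto intro!: continuous_intros)
  have mS: "S \<in> sets \<pi>" unfolding coupD(2)[OF \<pi>] using c0 by (rule borel_closed)
  have "ennreal (\<delta> powr p) * emeasure \<pi> S = (\<integral>\<^sup>+ z. ennreal (\<delta> powr p) * indicator S z \<partial>\<pi>)"
    by (rule nn_integral_cmult_indicator[symmetric]) (rule mS)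
  also have "\<dots> \<le> (\<integral>\<^sup>+ z. ennreal (dist (fst z) (snd z) powr p) \<partial>\<pi>)"
  proof (rule nn_integral_mono)
    fix z
    show "ennreal (\<delta> powr p) * indicator S z \<le> ennreal (dist (fst z) (snd z) powr p)"
    proof (cases "z \<in> S")
      case True
      then have "\<delta> powr p \<le> dist (fst z) (snd z) powr p"
        using d p unfolding S_def by (intro powr_mono2) auto
      then show ?thesis using True by (simp add: ennreal_leI)
    qed simp
  qed
  also note c
  finally have "ennreal (\<delta> powr p * measure \<pi> S) < ennreal \<epsilon>"
    by (simp add: emeasure_eq_measure ennreal_mult'')
  hence "\<delta> powr p * measure \<pi> S < \<epsilon>"
    by (subst (asm) ennreal_less_iff) auto
  moreover have "0 < \<delta> powr p" using d by simp
  ultimately show ?thesis unfolding S_def[symmetric] by (simp add: pos_le_divide_eq mult.commute)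
qed

lemma sets_borel_closed: "sets (borel :: 'a::topological_space measure) = sigma_sets UNIV (Collect closed)"
  by (subst borel_eq_closed) (simp add: sets_measure_of)

lemma wcost0_eq:
  fixes \<mu> \<nu> :: "'a::polish_space measure"
  assumes \<mu>: "\<mu> \<in> Pp p UNIV dist" and \<nu>: "\<nu> \<in> Pp p UNIV dist" and p: "1 \<le> p"
    and w: "wcost p UNIV dist \<mu> \<nu> = 0"
  shows "\<mu> = \<nu>"
proof -
  interpret M: prob_space \<mu> by (rule Pp_D(1)[OF \<mu>])
  interpret N: prob_space \<nu> by (rule Pp_D(1)[OF \<nu>])
  have approx: "\<exists>\<pi>\<in>couplings UNIV dist \<mu> \<nu>. (\<integral>\<^sup>+ z. ennreal (dist (fst z) (snd z) powr p) \<partial>\<pi>) < ennreal \<epsilon>"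
    if "0 < \<epsilon>" for \<epsilon>
  proof -
    have "wcost p UNIV dist \<mu> \<nu> < ennreal \<epsilon>" using w that by simp
    then show ?thesis unfolding wcost_def by (simp add: INF_less_iff)
  qed
  have key: "measure \<mu> F \<le> measure \<nu> {y. infdist y F < \<delta>} \<and> measure \<nu> F \<le> measure \<mu> {y. infdist y F < \<delta>}"
    if F: "closed F" and d: "0 < \<delta>" for F \<delta>
  proof -
    have o: "open {y. infdist y F < \<delta>}"
      by (rule open_Collect_less) (auto intro!: continuous_intros)
    have e: "measure \<mu> F \<le> measure \<nu> {y. infdist y F < \<delta>} + e \<and> measure \<nu> F \<le> measure \<mu> {y. infdist y F < \<delta>} + e"
      if e: "0 < e" for e
    proof -
      have "0 < e * \<delta> powr p" using e d by simp
      then obtain \<pi> where \<pi>: "\<pi> \<in> couplings UNIV dist \<mu> \<nu>"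
        and c: "(\<integral>\<^sup>+ z. ennreal (dist (fst z) (snd z) powr p) \<partial>\<pi>) < ennreal (e * \<delta> powr p)"
        using approx by blast
      have mk: "measure \<pi> {z. \<delta> \<le> dist (fst z) (snd z)} \<le> e"
        using coup_markov[OF \<pi> \<mu> d p c] d by simp
      have pc: "measure \<pi> (F \<times> UNIV) \<le> measure \<pi> (UNIV \<times> {y. infdist y F < \<delta>}) + measure \<pi> {z. \<delta> \<le> dist (fst z) (snd z)}"
        "measure \<pi> (UNIV \<times> F) \<le> measure \<pi> ({y. infdist y F < \<delta>} \<times> UNIV) + measure \<pi> {z. \<delta> \<le> dist (fst z) (snd z)}"
        using pos_core[OF coup_prob[OF \<pi> \<mu>] coupD(2)[OF \<pi>] F d] by auto
      have bF: "F \<in> sets borel" using F by (rule borel_closed)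
      have bO: "{y. infdist y F < \<delta>} \<in> sets borel" using o by (rule borel_open)
      show ?thesis
        using pc mk coup_measure[OF \<pi> bF] coup_measure[OF \<pi> bO] by auto
    qed
    show ?thesis
      using field_le_epsilon[of "measure \<mu> F" "measure \<nu> {y. infdist y F < \<delta>}"]
        field_le_epsilon[of "measure \<nu> F" "measure \<mu> {y. infdist y F < \<delta>}"] e by blast
  qed
  have closed_eq: "measure \<mu> F = measure \<nu> F" if F: "closed F" for F
  proof (cases "F = {}")
    case True then show ?thesis by simp
  next
    case False
    define G where "G n = {y. infdist y F < inverse (real (Suc n))}" for n
    have dec: "decseq G" unfolding G_def decseq_def
    proof (intro allI impI subsetI)
      fix m n :: nat and y assume "m \<le> n" "y \<in> {y. infdist y F < inverse (real (Suc n))}"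
      have le: "inverse (real (Suc n)) \<le> inverse (real (Suc m))"
        using \<open>m \<le> n\<close> by (intro le_imp_inverse_le) auto
      have "infdist y F < inverse (real (Suc n))" using \<open>y \<in> _\<close> by simp
      then have "infdist y F < inverse (real (Suc m))" using le by linarith
      then show "y \<in> {y. infdist y F < inverse (real (Suc m))}" by simp
    qed
    have oG: "open (G n)" for n unfolding G_def
      by (rule open_Collect_less) (auto intro!: continuous_intros)
    have int: "(\<Inter>n. G n) = F"
    proof safe
      fix y assume y: "y \<in> (\<Inter>n. G n)"
      have "infdist y F = 0"
      proof (rule ccontr)
        assume "infdist y F \<noteq> 0"
        then have "0 < infdist y F" using infdist_nonneg[of y F] by simp
        then obtain n where "inverse (real (Suc n)) < infdist y F" using reals_Archimedean by blast
        moreover have "infdist y F < inverse (real (Suc n))" using y unfolding G_def by auto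
        ultimately show False by linarith
      qed
      then have "y \<in> closure F" using in_closure_iff_infdist_zero[OF False] by simp
      then show "y \<in> F" using F by (simp add: closure_closed)
    next
      fix y n assume "y \<in> F"
      then show "y \<in> G n" unfolding G_def by (simp add: infdist_zero)
    qed
    have rG: "range G \<subseteq> sets borel" using oG by (auto intro: borel_open)
    have lN: "(\<lambda>n. measure \<nu> (G n)) \<longlonglongrightarrow> measure \<nu> F"
      using N.finite_Lim_measure_decseq[of G] rG dec Pp_D(2)[OF \<nu>] int by simp
    have lM: "(\<lambda>n. measure \<mu> (G n)) \<longlonglongrightarrow> measure \<mu> F"
      using M.finite_Lim_measure_decseq[of G] rG dec Pp_D(2)[OF \<mu>] int by simp
    have "measure \<mu> F \<le> measure \<nu> F"
      by (rule LIMSEQ_le_const[OF lN]) (use key[OF F] in \<open>auto simp: G_def\<close>)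
    moreover have "measure \<nu> F \<le> measure \<mu> F"
      by (rule LIMSEQ_le_const[OF lM]) (use key[OF F] in \<open>auto simp: G_def\<close>)
    ultimately show ?thesis by simp
  qed
  show ?thesis
  proof (rule measure_eqI_generator_eq[where E="Collect closed" and \<Omega>=UNIV and A="\<lambda>_. UNIV"])
    show "Int_stable (Collect closed)" by (auto simp: Int_stable_def)
    show "Collect closed \<subseteq> Pow UNIV" by simp
    show "emeasure \<mu> X = emeasure \<nu> X" if "X \<in> Collect closed" for X
      using closed_eq[of X] that by (simp add: M.emeasure_eq_measure N.emeasure_eq_measure)
    show "sets \<mu> = sigma_sets UNIV (Collect closed)" using Pp_D(2)[OF \<mu>] sets_borel_closed by simp
    show "sets \<nu> = sigma_sets UNIV (Collect closed)" using Pp_D(2)[OF \<nu>] sets_borel_closed by simp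
    show "range (\<lambda>_. UNIV) \<subseteq> Collect closed" by simp
    show "(\<Union>i. UNIV) = UNIV" by simp
    show "emeasure \<mu> UNIV \<noteq> \<infinity>" for i :: nat by simp
  qed
qed

lemma wass_pos:
  fixes \<mu> \<nu> :: "'a::polish_space measure"
  assumes \<mu>: "\<mu> \<in> Pp p UNIV dist" and \<nu>: "\<nu> \<in> Pp p UNIV dist" and p: "1 \<le> p"
  shows "wass p UNIV dist \<mu> \<nu> = 0 \<longleftrightarrow> \<mu> = \<nu>"
  using wcost0_eq[OF \<mu> \<nu> p] wass_eq0[OF \<mu> \<nu> p] wass_self[OF \<mu>] by auto

lemma conv2:
  fixes x y t p :: real
  assumes x: "0 \<le> x" and y: "0 \<le> y" and t: "0 \<le> t" "t \<le> 1" and p: "1 \<le> p"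
  shows "((1 - t) * x + t * y) powr p \<le> (1 - t) * x powr p + t * y powr p"
proof -
  have tp: "s powr p \<le> s" if "0 \<le> s" "s \<le> 1" for s :: real
  proof -
    have "s powr p \<le> s powr 1" using that p by (intro powr_mono') auto
    also have "\<dots> = s" using that by simp
    finally show ?thesis .
  qed
  show ?thesis
  proof (cases "x = 0")
    case True
    have "(t * y) powr p = t powr p * y powr p" using t y by (simp add: powr_mult)
    also have "\<dots> \<le> t * y powr p" using tp[OF t] by (intro mult_right_mono) auto
    finally show ?thesis using True by simp
  next
    case x0: False
    show ?thesis
    proof (cases "y = 0")
      case True
      have "((1 - t) * x) powr p = (1 - t) powr p * x powr p" using t x by (simp add: powr_mult)
      also have "\<dots> \<le> (1 - t) * x powr p" using tp[of "1 - t"] t by (intro mult_right_mono) auto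
      finally show ?thesis using True by simp
    next
      case False
      then show ?thesis
        using convex_onD[OF powr_convex[OF p], of t x y] x x0 y t by auto
    qed
  qed
qed

lemma split2:
  fixes u v a p :: real
  assumes u: "0 \<le> u" and v: "0 \<le> v" and a: "0 < a" "a < 1" and p: "1 \<le> p"
  shows "(u + v) powr p \<le> a powr (1 - p) * u powr p + (1 - a) powr (1 - p) * v powr p"
proof -
  have e: "u + v = (1 - (1 - a)) * (u / a) + (1 - a) * (v / (1 - a))" using a by simp
  have "(u + v) powr p \<le> (1 - (1 - a)) * (u / a) powr p + (1 - a) * (v / (1 - a)) powr p"
    unfolding e using u v a p by (intro conv2) auto
  also have "(1 - (1 - a)) * (u / a) powr p = a powr (1 - p) * u powr p"
    using a u by (simp add: powr_divide powr_diff)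
  also have "(1 - a) * (v / (1 - a)) powr p = (1 - a) powr (1 - p) * v powr p"
    using a v by (simp add: powr_divide powr_diff)
  finally show ?thesis .
qed

lemma split3:
  fixes a b c s1 s2 s3 p :: real
  assumes "0 \<le> a" "0 \<le> b" "0 \<le> c" "0 < s1" "0 < s2" "0 < s3" and p: "1 \<le> p"
  shows "(a + b + c) powr p \<le>
    (s1 / (s1 + s2 + s3)) powr (1 - p) * a powr p + (s2 / (s1 + s2 + s3)) powr (1 - p) * b powr p
    + (s3 / (s1 + s2 + s3)) powr (1 - p) * c powr p"
proof -
  define S where "S = s1 + s2 + s3"
  have S: "0 < S" using assms unfolding S_def by simp
  define \<alpha> where "\<alpha> = s1 / S"
  define \<beta> where "\<beta> = s2 / (s2 + s3)"
  have a: "0 < \<alpha>" "\<alpha> < 1" using assms unfolding \<alpha>_def S_def by (auto simp: field_simps)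
  have b: "0 < \<beta>" "\<beta> < 1" using assms unfolding \<beta>_def by (auto simp: field_simps)
  have h1: "(a + b + c) powr p \<le> \<alpha> powr (1 - p) * a powr p + (1 - \<alpha>) powr (1 - p) * (b + c) powr p"
    using split2[of a "b + c" \<alpha> p] assms a by (simp add: add.assoc)
  have h2: "(b + c) powr p \<le> \<beta> powr (1 - p) * b powr p + (1 - \<beta>) powr (1 - p) * c powr p"
    using assms b by (intro split2) auto
  have h3: "(1 - \<alpha>) powr (1 - p) * (b + c) powr p \<le> (1 - \<alpha>) powr (1 - p) * (\<beta> powr (1 - p) * b powr p + (1 - \<beta>) powr (1 - p) * c powr p)"
    using h2 by (intro mult_left_mono) auto
  have e1: "((1 - \<alpha>) * \<beta>) powr (1 - p) = (1 - \<alpha>) powr (1 - p) * \<beta> powr (1 - p)"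
    using a b by (simp add: powr_mult)
  have e2: "((1 - \<alpha>) * (1 - \<beta>)) powr (1 - p) = (1 - \<alpha>) powr (1 - p) * (1 - \<beta>) powr (1 - p)"
    using a b by (simp add: powr_mult)
  have s23: "0 < s2 + s3" using assms by simp
  have ma: "1 - \<alpha> = (s2 + s3) / S" unfolding \<alpha>_def using S by (simp add: field_simps S_def)
  have mb: "1 - \<beta> = s3 / (s2 + s3)" unfolding \<beta>_def using s23 by (simp add: field_simps)
  have e3: "(1 - \<alpha>) * \<beta> = s2 / S" unfolding ma \<beta>_def using s23 by simp
  have e4: "(1 - \<alpha>) * (1 - \<beta>) = s3 / S" unfolding ma mb using s23 by simp
  have e5: "(1 - \<alpha>) powr (1 - p) * (\<beta> powr (1 - p) * b powr p + (1 - \<beta>) powr (1 - p) * c powr p)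
      = (s2 / S) powr (1 - p) * b powr p + (s3 / S) powr (1 - p) * c powr p"
    apply (unfold e3[symmetric] e4[symmetric] e1 e2)
    apply (simp add: algebra_simps)?
    done
  have "(a + b + c) powr p \<le> (s1 / S) powr (1 - p) * a powr p + ((s2 / S) powr (1 - p) * b powr p + (s3 / S) powr (1 - p) * c powr p)"
    using h1 h3 e5 unfolding \<alpha>_def by linarith
  then show ?thesis unfolding S_def by (simp add: add.assoc)
qed

lemma split3_final:
  fixes a b c c1 c2 e p :: real
  assumes "0 \<le> c1" "0 \<le> c2" "0 < e" and p: "1 \<le> p"
  defines "s1 \<equiv> c1 powr (1 / p) + e" and "s3 \<equiv> c2 powr (1 / p) + e"
  shows "(s1 / (s1 + e + s3)) powr (1 - p) * c1 + (e / (s1 + e + s3)) powr (1 - p) * e powr p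
    + (s3 / (s1 + e + s3)) powr (1 - p) * c2 \<le> (s1 + e + s3) powr p"
proof -
  define S where "S = s1 + e + s3"
  have s1: "0 < s1" unfolding s1_def using \<open>0 < e\<close> powr_ge_zero[of c1 "1 / p"] by linarith
  have s3: "0 < s3" unfolding s3_def using \<open>0 < e\<close> powr_ge_zero[of c2 "1 / p"] by linarith
  have S: "0 < S" using s1 s3 assms unfolding S_def by simp
  have key: "(s / S) powr (1 - p) * s powr p = s * S powr (p - 1)" if "0 < s" for s
  proof -
    have "(s / S) powr (1 - p) * s powr p = s powr (1 - p) * s powr p / S powr (1 - p)"
      using that S by (simp add: powr_divide)
    also have "s powr (1 - p) * s powr p = s" using that by (simp add: powr_add[symmetric])
    also have "s / S powr (1 - p) = s * S powr (p - 1)"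
    proof -
      have "S powr (1 - p) = inverse (S powr (p - 1))" using powr_minus[of S "p - 1"] by simp
      then show ?thesis by (simp add: divide_inverse)
    qed
    finally show ?thesis .
  qed
  have c1le: "c1 \<le> s1 powr p"
  proof -
    have "c1 = (c1 powr (1 / p)) powr p" using assms by (simp add: powr_powr)
    also have "\<dots> \<le> s1 powr p" unfolding s1_def using assms by (intro powr_mono2) auto
    finally show ?thesis .
  qed
  have c2le: "c2 \<le> s3 powr p"
  proof -
    have "c2 = (c2 powr (1 / p)) powr p" using assms by (simp add: powr_powr)
    also have "\<dots> \<le> s3 powr p" unfolding s3_def using assms by (intro powr_mono2) auto
    finally show ?thesis .
  qed
  have "(s1 / S) powr (1 - p) * c1 \<le> (s1 / S) powr (1 - p) * s1 powr p"
    using c1le by (intro mult_left_mono) auto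
  moreover have "(s3 / S) powr (1 - p) * c2 \<le> (s3 / S) powr (1 - p) * s3 powr p"
    using c2le by (intro mult_left_mono) auto
  ultimately have "(s1 / S) powr (1 - p) * c1 + (e / S) powr (1 - p) * e powr p + (s3 / S) powr (1 - p) * c2
      \<le> s1 * S powr (p - 1) + e * S powr (p - 1) + s3 * S powr (p - 1)"
    using key[OF s1] key[OF s3] key[OF \<open>0 < e\<close>] by linarith
  also have "\<dots> = S * S powr (p - 1)" unfolding S_def by (simp add: algebra_simps)
  also have "\<dots> = S powr p" using S by (simp add: powr_add[symmetric] powr_diff)
  finally show ?thesis unfolding S_def .
qed

lemma small_partition:
  fixes \<epsilon> :: real
  assumes e: "0 < \<epsilon>"
  obtains B :: "nat \<Rightarrow> 'a::polish_space set"
  where "\<And>k. B k \<in> sets borel" "disjoint_family B" "(\<Union>k. B k) = UNIV"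
    "\<And>k y y'. y \<in> B k \<Longrightarrow> y' \<in> B k \<Longrightarrow> dist y y' \<le> \<epsilon>"
proof -
  obtain D :: "'a set" where D: "countable D" "\<And>X. open X \<Longrightarrow> X \<noteq> {} \<Longrightarrow> \<exists>d\<in>D. d \<in> X"
    by (rule countable_dense_setE) blast
  define q where "q = from_nat_into D"
  define A where "A k = ball (q k) (\<epsilon> / 2)" for k
  define B where "B = disjointed A"
  have oA: "open (A k)" for k unfolding A_def by simp
  have mB: "B k \<in> sets borel" for k
  proof -
    have "A k \<in> sets borel" using oA by (rule borel_open)
    moreover have "(\<Union>i\<in>{0..<k}. A i) \<in> sets borel"
      by (rule borel_open) (rule open_UN, use oA in blast)
    ultimately show ?thesis unfolding B_def disjointed_def by (rule sets.Diff)
  qed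
  have cov: "y \<in> (\<Union>k. A k)" for y
  proof -
    have ne: "ball y (\<epsilon> / 2) \<noteq> {}" using e by simp
    have "\<exists>d\<in>D. d \<in> ball y (\<epsilon> / 2)" using D(2)[OF open_ball ne] .
    then obtain d where d: "d \<in> D" "d \<in> ball y (\<epsilon> / 2)" by blast
    have dd: "dist (q n) y < \<epsilon> / 2" if "q n = d" for n using d(2) that by (simp add: dist_commute)
    obtain n where "q n = d" using from_nat_into_surj[OF D(1) d(1)] unfolding q_def by blast
    then have "y \<in> A n" unfolding A_def using dd by simp
    then show ?thesis by blast
  qed
  have uA: "(\<Union>k. A k) = UNIV" using cov by blast
  have uB: "(\<Union>k. B k) = UNIV" unfolding B_def UN_disjointed_eq by (rule uA)
  have dB: "dist y y' \<le> \<epsilon>" if "y \<in> B k" "y' \<in> B k" for k y y'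
  proof -
    have "y \<in> A k" "y' \<in> A k" using that disjointed_subset[of A k] unfolding B_def by blast+
    then have h: "dist (q k) y < \<epsilon> / 2" "dist (q k) y' < \<epsilon> / 2" unfolding A_def by auto
    have "dist y y' \<le> dist y (q k) + dist y' (q k)" by (rule dist_triangle2)
    then show ?thesis using h dist_commute[of y "q k"] dist_commute[of y' "q k"] by linarith
  qed
  show ?thesis
    by (rule that[OF mB _ uB dB]) (simp add: B_def disjoint_family_disjointed)
qed

lemma suminf_part:
  assumes R: "\<And>k. R k \<in> sets M" and d: "disjoint_family R" and u: "(\<Union>k. R k) = space M"
    and g: "g \<in> borel_measurable M"
  shows "(\<Sum>k. \<integral>\<^sup>+ z. g z * indicator (R k) z \<partial>M) = (\<integral>\<^sup>+ z. g z \<partial>M)"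
proof -
  have "(\<Sum>k. \<integral>\<^sup>+ z. g z * indicator (R k) z \<partial>M) = (\<integral>\<^sup>+ z. (\<Sum>k. g z * indicator (R k) z) \<partial>M)"
    by (rule nn_integral_suminf[symmetric]) (use g R in auto)
  also have "\<dots> = (\<integral>\<^sup>+ z. g z * indicator (\<Union>k. R k) z \<partial>M)"
    by (simp add: suminf_indicator[OF d])
  also have "\<dots> = (\<integral>\<^sup>+ z. g z \<partial>M)"
    by (rule nn_integral_cong) (simp add: u)
  finally show ?thesis .
qed

locale glue =
  fixes \<mu> \<nu> \<rho> :: "'a::polish_space measure" and p :: real
    and \<pi>1 \<pi>2 :: "('a \<times> 'a) measure" and B :: "nat \<Rightarrow> 'a set"
  assumes \<mu>: "\<mu> \<in> Pp p UNIV dist" and \<nu>: "\<nu> \<in> Pp p UNIV dist" and \<rho>: "\<rho> \<in> Pp p UNIV dist"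
    and p: "1 \<le> p"
    and \<pi>1: "\<pi>1 \<in> couplings UNIV dist \<mu> \<nu>" and \<pi>2: "\<pi>2 \<in> couplings UNIV dist \<nu> \<rho>"
    and Bm: "\<And>k. B k \<in> sets borel" and Bd: "disjoint_family B" and Bu: "(\<Union>k. B k) = UNIV"
begin

definition "w k = measure \<nu> (B k)"
definition "P k = density \<pi>1 (indicator (UNIV \<times> B k))"
definition "Q k = density \<pi>2 (\<lambda>z. ennreal (1 / w k) * indicator (B k \<times> UNIV) z)"
definition "F k = P k \<Otimes>\<^sub>M Q k"
abbreviation "T \<equiv> (borel \<Otimes>\<^sub>M borel) \<Otimes>\<^sub>M (borel \<Otimes>\<^sub>M borel :: ('a \<times> 'a) measure)"
definition "G = count_space UNIV \<bind> F"

lemma prob1: "prob_space \<pi>1" by (rule coup_prob[OF \<pi>1 \<mu>])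
lemma prob2: "prob_space \<pi>2" by (rule coup_prob[OF \<pi>2 \<nu>])

lemma R1: "UNIV \<times> B k \<in> sets \<pi>1"
  unfolding coupD(1)[OF \<pi>1] by (intro pair_measureI) (simp_all add: Bm)
lemma R2: "B k \<times> UNIV \<in> sets \<pi>2"
  unfolding coupD(1)[OF \<pi>2] by (intro pair_measureI) (simp_all add: Bm)

lemma em1: "emeasure \<pi>1 (UNIV \<times> B k) = ennreal (w k)"
proof -
  interpret prob_space \<pi>1 by (rule prob1)
  show ?thesis using coup_measure(2)[OF \<pi>1 Bm[of k]] by (simp add: emeasure_eq_measure w_def)
qed

lemma em2: "emeasure \<pi>2 (B k \<times> UNIV) = ennreal (w k)"
proof -
  interpret prob_space \<pi>2 by (rule prob2)
  show ?thesis using coup_measure(1)[OF \<pi>2 Bm[of k]] by (simp add: emeasure_eq_measure w_def)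
qed

lemma w_nonneg: "0 \<le> w k" unfolding w_def by simp

lemma sets_P: "sets (P k) = sets (borel \<Otimes>\<^sub>M borel)"
  unfolding P_def using coupD(1)[OF \<pi>1] by simp
lemma sets_Q: "sets (Q k) = sets (borel \<Otimes>\<^sub>M borel)"
  unfolding Q_def using coupD(1)[OF \<pi>2] by simp
lemma space_P: "space (P k) = UNIV"
  unfolding P_def using coupD(3)[OF \<pi>1] by simp
lemma space_Q: "space (Q k) = UNIV"
  unfolding Q_def using coupD(3)[OF \<pi>2] by simp

lemma dens1_meas: "indicator (UNIV \<times> B k) \<in> borel_measurable \<pi>1"
  using R1 by (rule borel_measurable_indicator)
lemma dens2_meas: "(\<lambda>z. ennreal (1 / w k) * indicator (B k \<times> UNIV) z) \<in> borel_measurable \<pi>2"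
  using R2 by (intro borel_measurable_times_ennreal borel_measurable_indicator borel_measurable_const)

lemma P_space: "emeasure (P k) UNIV = ennreal (w k)"
proof -
  have U: "UNIV \<in> sets \<pi>1" using sets.top[of \<pi>1] coupD(3)[OF \<pi>1] by simp
  have "emeasure (P k) UNIV = (\<integral>\<^sup>+ x. indicator (UNIV \<times> B k) x * indicator UNIV x \<partial>\<pi>1)"
    unfolding P_def by (rule emeasure_density[OF dens1_meas U])
  also have "\<dots> = emeasure \<pi>1 (UNIV \<times> B k)" using R1 by simp
  finally show ?thesis by (simp add: em1)
qed

lemma Q_space: "emeasure (Q k) UNIV = ennreal (1 / w k) * ennreal (w k)"
proof -
  have U: "UNIV \<in> sets \<pi>2" using sets.top[of \<pi>2] coupD(3)[OF \<pi>2] by simp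
  have "emeasure (Q k) UNIV = (\<integral>\<^sup>+ x. ennreal (1 / w k) * indicator (B k \<times> UNIV) x * indicator UNIV x \<partial>\<pi>2)"
    unfolding Q_def by (rule emeasure_density[OF dens2_meas U])
  also have "\<dots> = ennreal (1 / w k) * emeasure \<pi>2 (B k \<times> UNIV)"
    using R2 by (simp add: nn_integral_cmult_indicator)
  finally show ?thesis by (simp add: em2)
qed

lemma w_le1: "w k \<le> 1"
proof -
  interpret prob_space \<nu> by (rule Pp_D(1)[OF \<nu>])
  show ?thesis unfolding w_def by simp
qed

lemma one_div: "ennreal (1 / w k) * ennreal (w k) = (if w k = 0 then 0 else 1)"
  using w_nonneg[of k] by (simp add: ennreal_mult[symmetric])

lemma finP: "finite_measure (P k)"
  by (rule finite_measureI) (simp add: space_P P_space)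
lemma finQ: "finite_measure (Q k)"
  by (rule finite_measureI) (simp add: space_Q Q_space ennreal_mult_eq_top_iff)

lemma sets_F: "sets (F k) = sets T"
  unfolding F_def by (rule sets_pair_measure_cong[OF sets_P sets_Q])

lemma space_F: "space (F k) = UNIV"
  using sets_eq_imp_space_eq[OF sets_F[of k]] by (simp add: space_pair_measure)

lemma F_space: "emeasure (F k) UNIV = ennreal (w k) * (ennreal (1 / w k) * ennreal (w k))"
proof -
  interpret Q: finite_measure "Q k" by (rule finQ)
  have "emeasure (F k) (UNIV \<times> UNIV) = emeasure (P k) UNIV * emeasure (Q k) UNIV"
  proof -
    have U: "UNIV \<in> sets (borel \<Otimes>\<^sub>M borel :: ('a \<times> 'a) measure)"
      using sets.top[of "borel \<Otimes>\<^sub>M borel :: ('a \<times> 'a) measure"] by (simp add: space_pair_measure)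
    show ?thesis unfolding F_def by (rule Q.emeasure_pair_measure_Times) (simp_all add: sets_P sets_Q U)
  qed
  then show ?thesis by (simp add: P_space Q_space)
qed

lemma F_meas: "F \<in> measurable (count_space UNIV) (subprob_algebra T)"
proof -
  have "F k \<in> space (subprob_algebra T)" for k
  proof -
    have "emeasure (F k) UNIV \<le> 1"
      unfolding F_space one_div using w_le1[of k] by (auto simp: ennreal_le_1)
    then have "subprob_space (F k)" by (intro subprob_spaceI) (simp_all add: space_F)
    then show ?thesis by (simp add: space_subprob_algebra sets_F)
  qed
  then show ?thesis by simp
qed

lemma sets_G: "sets G = sets T"
  unfolding G_def by (rule sets_bind) (simp_all add: sets_F)

lemma space_G: "space G = UNIV"
  using sets_eq_imp_space_eq[OF sets_G] by (simp add: space_pair_measure)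

lemma intG: "f \<in> borel_measurable T \<Longrightarrow> (\<integral>\<^sup>+ z. f z \<partial>G) = (\<Sum>k. \<integral>\<^sup>+ z. f z \<partial>F k)"
  unfolding G_def by (simp add: nn_integral_bind[OF _ F_meas] nn_integral_count_space_nat)

lemma int_fst:
  assumes g: "g \<in> borel_measurable (borel \<Otimes>\<^sub>M borel)"
  shows "(\<integral>\<^sup>+ z. g (fst z) \<partial>F k) = (\<integral>\<^sup>+ z. g z \<partial>P k) * emeasure (Q k) UNIV"
proof -
  interpret Q: finite_measure "Q k" by (rule finQ)
  have gP: "g \<in> borel_measurable (P k)" by (subst measurable_cong_sets[OF sets_P[of k] refl]) (rule g)
  have m: "(\<lambda>z. g (fst z)) \<in> borel_measurable (P k \<Otimes>\<^sub>M Q k)" using gP by measurable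
  have "(\<integral>\<^sup>+ z. g (fst z) \<partial>F k) = (\<integral>\<^sup>+ x. \<integral>\<^sup>+ y. g (fst (x, y)) \<partial>Q k \<partial>P k)"
    unfolding F_def by (rule Q.nn_integral_fst[symmetric]) (rule m)
  also have "\<dots> = (\<integral>\<^sup>+ x. g x * emeasure (Q k) UNIV \<partial>P k)" by (simp add: space_Q)
  also have "\<dots> = (\<integral>\<^sup>+ z. g z \<partial>P k) * emeasure (Q k) UNIV" by (rule nn_integral_multc[OF gP])
  finally show ?thesis .
qed

lemma int_snd:
  assumes g: "g \<in> borel_measurable (borel \<Otimes>\<^sub>M borel)"
  shows "(\<integral>\<^sup>+ z. g (snd z) \<partial>F k) = (\<integral>\<^sup>+ z. g z \<partial>Q k) * emeasure (P k) UNIV"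
proof -
  interpret Q: finite_measure "Q k" by (rule finQ)
  have gQ: "g \<in> borel_measurable (Q k)" by (subst measurable_cong_sets[OF sets_Q[of k] refl]) (rule g)
  have m: "(\<lambda>z. g (snd z)) \<in> borel_measurable (P k \<Otimes>\<^sub>M Q k)" using gQ by measurable
  have "(\<integral>\<^sup>+ z. g (snd z) \<partial>F k) = (\<integral>\<^sup>+ x. \<integral>\<^sup>+ y. g (snd (x, y)) \<partial>Q k \<partial>P k)"
    unfolding F_def by (rule Q.nn_integral_fst[symmetric]) (rule m)
  also have "\<dots> = (\<integral>\<^sup>+ x. (\<integral>\<^sup>+ y. g y \<partial>Q k) \<partial>P k)" by simp
  also have "\<dots> = (\<integral>\<^sup>+ z. g z \<partial>Q k) * emeasure (P k) UNIV" by (simp add: space_P)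
  finally show ?thesis .
qed

lemma intP:
  assumes g: "g \<in> borel_measurable (borel \<Otimes>\<^sub>M borel)"
  shows "(\<integral>\<^sup>+ z. g z \<partial>P k) = (\<integral>\<^sup>+ z. g z * indicator (UNIV \<times> B k) z \<partial>\<pi>1)"
proof -
  have g1: "g \<in> borel_measurable \<pi>1" using g by (rule coup_meas[OF \<pi>1])
  show ?thesis unfolding P_def by (simp add: nn_integral_density[OF dens1_meas g1] mult.commute)
qed

lemma intQ:
  assumes g: "g \<in> borel_measurable (borel \<Otimes>\<^sub>M borel)"
  shows "(\<integral>\<^sup>+ z. g z \<partial>Q k) = ennreal (1 / w k) * (\<integral>\<^sup>+ z. g z * indicator (B k \<times> UNIV) z \<partial>\<pi>2)"
proof -
  have g2: "g \<in> borel_measurable \<pi>2" using g by (rule coup_meas[OF \<pi>2])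
  have "(\<integral>\<^sup>+ z. g z \<partial>Q k) = (\<integral>\<^sup>+ z. ennreal (1 / w k) * (g z * indicator (B k \<times> UNIV) z) \<partial>\<pi>2)"
    unfolding Q_def by (simp add: nn_integral_density[OF dens2_meas g2] ac_simps)
  also have "\<dots> = ennreal (1 / w k) * (\<integral>\<^sup>+ z. g z * indicator (B k \<times> UNIV) z \<partial>\<pi>2)"
    by (rule nn_integral_cmult) (use g2 R2 in simp)
  finally show ?thesis .
qed

lemma null1: "w k = 0 \<Longrightarrow> (\<integral>\<^sup>+ z. g z * indicator (UNIV \<times> B k) z \<partial>\<pi>1) = 0"
  by (rule nn_integral_null_set) (simp add: null_sets_def R1 em1)
lemma null2: "w k = 0 \<Longrightarrow> (\<integral>\<^sup>+ z. g z * indicator (B k \<times> UNIV) z \<partial>\<pi>2) = 0"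
  by (rule nn_integral_null_set) (simp add: null_sets_def R2 em2)

lemma M1:
  assumes g: "g \<in> borel_measurable (borel \<Otimes>\<^sub>M borel)"
  shows "(\<integral>\<^sup>+ z. g (fst z) \<partial>G) = (\<integral>\<^sup>+ z. g z \<partial>\<pi>1)"
proof -
  have mT: "(\<lambda>z. g (fst z)) \<in> borel_measurable T" using g by measurable
  have "(\<integral>\<^sup>+ z. g (fst z) \<partial>G) = (\<Sum>k. \<integral>\<^sup>+ z. g (fst z) \<partial>F k)" by (rule intG[OF mT])
  also have "\<dots> = (\<Sum>k. \<integral>\<^sup>+ z. g z * indicator (UNIV \<times> B k) z \<partial>\<pi>1)"
  proof (rule suminf_cong)
    fix k
    show "(\<integral>\<^sup>+ z. g (fst z) \<partial>F k) = (\<integral>\<^sup>+ z. g z * indicator (UNIV \<times> B k) z \<partial>\<pi>1)"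
      unfolding int_fst[OF g] intP[OF g] Q_space one_div using null1[of k g] by auto
  qed
  also have "\<dots> = (\<integral>\<^sup>+ z. g z \<partial>\<pi>1)"
  proof (rule suminf_part)
    show "UNIV \<times> B k \<in> sets \<pi>1" for k by (rule R1)
    show "disjoint_family (\<lambda>k. UNIV \<times> B k)" using Bd by (auto simp: disjoint_family_on_def)
    have "(\<Union>k. UNIV \<times> B k) = UNIV \<times> (\<Union>k. B k)" by blast
    then show "(\<Union>k. UNIV \<times> B k) = space \<pi>1" using Bu coupD(3)[OF \<pi>1] by simp
    show "g \<in> borel_measurable \<pi>1" using g by (rule coup_meas[OF \<pi>1])
  qed
  finally show ?thesis .
qed

lemma M2:
  assumes g: "g \<in> borel_measurable (borel \<Otimes>\<^sub>M borel)"
  shows "(\<integral>\<^sup>+ z. g (snd z) \<partial>G) = (\<integral>\<^sup>+ z. g z \<partial>\<pi>2)"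
proof -
  have mT: "(\<lambda>z. g (snd z)) \<in> borel_measurable T" using g by measurable
  have "(\<integral>\<^sup>+ z. g (snd z) \<partial>G) = (\<Sum>k. \<integral>\<^sup>+ z. g (snd z) \<partial>F k)" by (rule intG[OF mT])
  also have "\<dots> = (\<Sum>k. \<integral>\<^sup>+ z. g z * indicator (B k \<times> UNIV) z \<partial>\<pi>2)"
  proof (rule suminf_cong)
    fix k
    have "(\<integral>\<^sup>+ z. g (snd z) \<partial>F k) = (\<integral>\<^sup>+ z. g z * indicator (B k \<times> UNIV) z \<partial>\<pi>2) * (ennreal (1 / w k) * ennreal (w k))"
      unfolding int_snd[OF g] intQ[OF g] P_space by (simp add: ac_simps)
    then show "(\<integral>\<^sup>+ z. g (snd z) \<partial>F k) = (\<integral>\<^sup>+ z. g z * indicator (B k \<times> UNIV) z \<partial>\<pi>2)"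
      unfolding one_div using null2[of k g] by auto
  qed
  also have "\<dots> = (\<integral>\<^sup>+ z. g z \<partial>\<pi>2)"
  proof (rule suminf_part)
    show "B k \<times> UNIV \<in> sets \<pi>2" for k by (rule R2)
    show "disjoint_family (\<lambda>k. B k \<times> UNIV)" using Bd by (auto simp: disjoint_family_on_def)
    have "(\<Union>k. B k \<times> UNIV) = (\<Union>k. B k) \<times> UNIV" by blast
    then show "(\<Union>k. B k \<times> UNIV) = space \<pi>2" using Bu coupD(3)[OF \<pi>2] by simp
    show "g \<in> borel_measurable \<pi>2" using g by (rule coup_meas[OF \<pi>2])
  qed
  finally show ?thesis .
qed

end

context glue
begin

abbreviation "Tz \<equiv> (\<lambda>z::('a \<times> 'a) \<times> ('a \<times> 'a). (fst (fst z), snd (snd z)))"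
definition "\<gamma> = distr G (borel \<Otimes>\<^sub>M borel) Tz"

lemma Tm: "Tz \<in> measurable G (borel \<Otimes>\<^sub>M borel)"
  by (subst measurable_cong_sets[OF sets_G refl]) measurable

lemma G_meas: "f \<in> measurable T N \<Longrightarrow> f \<in> measurable G N"
  by (subst measurable_cong_sets[OF sets_G refl])

lemma gamma_fst: "distr \<gamma> borel fst = \<mu>"
proof -
  have d: "distr \<gamma> borel fst = distr G borel (fst \<circ> Tz)"
    unfolding \<gamma>_def by (rule distr_distr[OF _ Tm]) simp
  show ?thesis unfolding d
  proof (rule measure_eqI)
    show "sets (distr G borel (fst \<circ> Tz)) = sets \<mu>" using Pp_D(2)[OF \<mu>] by simp
    fix A assume "A \<in> sets (distr G borel (fst \<circ> Tz))"
    then have A: "A \<in> sets borel" by simp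
    have m: "fst \<circ> Tz \<in> measurable G borel" by (rule G_meas) simp
    have "emeasure (distr G borel (fst \<circ> Tz)) A = (\<integral>\<^sup>+ x. indicator A x \<partial>distr G borel (fst \<circ> Tz))"
      using A by simp
    also have "\<dots> = (\<integral>\<^sup>+ z. indicator A (fst (fst z)) \<partial>G)"
      by (subst nn_integral_distr[OF m]) (simp_all add: borel_measurable_indicator[OF A] comp_def)
    also have "\<dots> = (\<integral>\<^sup>+ z. indicator A (fst z) \<partial>\<pi>1)"
      using M1[of "\<lambda>z. indicator A (fst z)"] A by simp
    also have "\<dots> = (\<integral>\<^sup>+ x. indicator A x \<partial>\<mu>)"
      using coup_int_fst[OF \<pi>1 borel_measurable_indicator[OF A]] by simp
    also have "\<dots> = emeasure \<mu> A" using A Pp_D(2)[OF \<mu>] by simp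
    finally show "emeasure (distr G borel (fst \<circ> Tz)) A = emeasure \<mu> A" .
  qed
qed

lemma gamma_snd: "distr \<gamma> borel snd = \<rho>"
proof -
  have d: "distr \<gamma> borel snd = distr G borel (snd \<circ> Tz)"
    unfolding \<gamma>_def by (rule distr_distr[OF _ Tm]) simp
  show ?thesis unfolding d
  proof (rule measure_eqI)
    show "sets (distr G borel (snd \<circ> Tz)) = sets \<rho>" using Pp_D(2)[OF \<rho>] by simp
    fix A assume "A \<in> sets (distr G borel (snd \<circ> Tz))"
    then have A: "A \<in> sets borel" by simp
    have m: "snd \<circ> Tz \<in> measurable G borel" by (rule G_meas) simp
    have "emeasure (distr G borel (snd \<circ> Tz)) A = (\<integral>\<^sup>+ x. indicator A x \<partial>distr G borel (snd \<circ> Tz))"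
      using A by simp
    also have "\<dots> = (\<integral>\<^sup>+ z. indicator A (snd (snd z)) \<partial>G)"
      by (subst nn_integral_distr[OF m]) (simp_all add: borel_measurable_indicator[OF A] comp_def)
    also have "\<dots> = (\<integral>\<^sup>+ z. indicator A (snd z) \<partial>\<pi>2)"
      using M2[of "\<lambda>z. indicator A (snd z)"] A by simp
    also have "\<dots> = (\<integral>\<^sup>+ x. indicator A x \<partial>\<rho>)"
      using coup_int_snd[OF \<pi>2 borel_measurable_indicator[OF A]] by simp
    also have "\<dots> = emeasure \<rho> A" using A Pp_D(2)[OF \<rho>] by simp
    finally show "emeasure (distr G borel (snd \<circ> Tz)) A = emeasure \<rho> A" .
  qed
qed

lemma gamma_coup: "\<gamma> \<in> couplings UNIV dist \<mu> \<rho>"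
  unfolding couplings_UNIV using gamma_fst gamma_snd by (simp add: \<gamma>_def)

lemma AE_F: "AE z in F k. snd (fst z) \<in> B k \<and> fst (snd z) \<in> B k"
proof -
  interpret P: finite_measure "P k" by (rule finP)
  interpret Q: finite_measure "Q k" by (rule finQ)
  interpret PQ: pair_sigma_finite "P k" "Q k" ..
  have aeP: "AE x in P k. snd x \<in> B k"
    unfolding P_def AE_density[OF dens1_meas]
    by (rule AE_I2) (auto simp: mem_Times_iff split: split_indicator)
  have aeQ: "AE y in Q k. fst y \<in> B k"
    unfolding Q_def AE_density[OF dens2_meas]
    by (rule AE_I2) (auto simp: mem_Times_iff split: split_indicator)
  have r: "UNIV \<times> B k \<in> sets (borel \<Otimes>\<^sub>M borel)" "B k \<times> UNIV \<in> sets (borel \<Otimes>\<^sub>M borel)"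
    by (intro pair_measureI; simp add: Bm)+
  have "{x \<in> space (P k \<Otimes>\<^sub>M Q k). snd (fst x) \<in> B k \<and> fst (snd x) \<in> B k} = (UNIV \<times> B k) \<times> (B k \<times> UNIV)"
    by (auto simp: space_pair_measure space_P space_Q)
  also have "\<dots> \<in> sets (P k \<Otimes>\<^sub>M Q k)"
    using r by (intro pair_measureI) (simp_all add: sets_P sets_Q)
  finally have mset: "{x \<in> space (P k \<Otimes>\<^sub>M Q k). snd (fst x) \<in> B k \<and> fst (snd x) \<in> B k} \<in> sets (P k \<Otimes>\<^sub>M Q k)" .
  have "AE x in P k. AE y in Q k. snd (fst (x, y)) \<in> B k \<and> fst (snd (x, y)) \<in> B k"
  proof (rule AE_mp[OF aeP], rule AE_I2, rule impI)
    fix x assume x: "snd x \<in> B k"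
    show "AE y in Q k. snd (fst (x, y)) \<in> B k \<and> fst (snd (x, y)) \<in> B k"
      by (rule AE_mp[OF aeQ], rule AE_I2) (simp add: x)
  qed
  then show ?thesis unfolding F_def by (rule PQ.AE_pair_measure[OF mset])
qed

lemma gamma_cost:
  fixes L1 L2 L3 \<epsilon> :: real
  assumes diam: "\<And>k y y'. y \<in> B k \<Longrightarrow> y' \<in> B k \<Longrightarrow> dist y y' \<le> \<epsilon>" and e: "0 \<le> \<epsilon>"
    and L: "0 \<le> L1" "0 \<le> L2" "0 \<le> L3"
    and spl: "\<And>a b c. 0 \<le> a \<Longrightarrow> 0 \<le> b \<Longrightarrow> 0 \<le> c \<Longrightarrow> (a + b + c) powr p \<le> L1 * a powr p + L2 * b powr p + L3 * c powr p"
  shows "(\<integral>\<^sup>+ z. ennreal (dist (fst z) (snd z) powr p) \<partial>\<gamma>) \<le>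
    (\<integral>\<^sup>+ z. ennreal (L1 * dist (fst z) (snd z) powr p) \<partial>\<pi>1) + ennreal (L2 * \<epsilon> powr p)
     + (\<integral>\<^sup>+ z. ennreal (L3 * dist (fst z) (snd z) powr p) \<partial>\<pi>2)"
proof -
  define g where "g z = ennreal (dist (fst (fst z)) (snd (snd z)) powr p)" for z :: "('a \<times> 'a) \<times> ('a \<times> 'a)"
  define h1 where "h1 z = ennreal (L1 * dist (fst z) (snd z) powr p)" for z :: "'a \<times> 'a"
  define h3 where "h3 z = ennreal (L3 * dist (fst z) (snd z) powr p)" for z :: "'a \<times> 'a"
  define c where "c = ennreal (L2 * \<epsilon> powr p)"
  define h where "h z = h1 (fst z) + c + h3 (snd z)" for z :: "('a \<times> 'a) \<times> ('a \<times> 'a)"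
  have mh1: "h1 \<in> borel_measurable (borel \<Otimes>\<^sub>M borel)" unfolding h1_def by measurable
  have mh3: "h3 \<in> borel_measurable (borel \<Otimes>\<^sub>M borel)" unfolding h3_def by measurable
  have mg: "g \<in> borel_measurable T" unfolding g_def by measurable
  have mh: "h \<in> borel_measurable T" unfolding h_def using mh1 mh3 by measurable
  have "(\<integral>\<^sup>+ z. ennreal (dist (fst z) (snd z) powr p) \<partial>\<gamma>) = (\<integral>\<^sup>+ z. g z \<partial>G)"
    unfolding \<gamma>_def g_def by (subst nn_integral_distr[OF Tm]) (simp_all, measurable)
  also have "\<dots> = (\<Sum>k. \<integral>\<^sup>+ z. g z \<partial>F k)" by (rule intG[OF mg])
  also have "\<dots> \<le> (\<Sum>k. \<integral>\<^sup>+ z. h z \<partial>F k)"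
  proof (rule suminf_le[OF _ summableI summableI])
    fix k
    show "(\<integral>\<^sup>+ z. g z \<partial>F k) \<le> (\<integral>\<^sup>+ z. h z \<partial>F k)"
    proof (rule nn_integral_mono_AE)
      show "AE z in F k. g z \<le> h z"
      proof (rule AE_mp[OF AE_F], rule AE_I2, rule impI)
        fix z :: "('a \<times> 'a) \<times> ('a \<times> 'a)"
        assume zB: "snd (fst z) \<in> B k \<and> fst (snd z) \<in> B k"
        define x0 where "x0 = fst (fst z)"
        define y1 where "y1 = snd (fst z)"
        define y2 where "y2 = fst (snd z)"
        define z3 where "z3 = snd (snd z)"
        have dy: "dist y1 y2 \<le> \<epsilon>" using diam zB unfolding y1_def y2_def by blast
        have t1: "dist x0 z3 \<le> dist x0 y1 + dist y1 z3" by (rule dist_triangle)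
        have t2: "dist y1 z3 \<le> dist y1 y2 + dist y2 z3" by (rule dist_triangle)
        have "dist x0 z3 \<le> dist x0 y1 + \<epsilon> + dist y2 z3" using t1 t2 dy by linarith
        hence "dist x0 z3 powr p \<le> (dist x0 y1 + \<epsilon> + dist y2 z3) powr p"
          using p by (intro powr_mono2) auto
        also have "\<dots> \<le> L1 * dist x0 y1 powr p + L2 * \<epsilon> powr p + L3 * dist y2 z3 powr p"
          using e by (intro spl) auto
        finally have "ennreal (dist x0 z3 powr p) \<le> ennreal (L1 * dist x0 y1 powr p + L2 * \<epsilon> powr p + L3 * dist y2 z3 powr p)"
          by (rule ennreal_leI)
        also have "\<dots> = ennreal (L1 * dist x0 y1 powr p) + ennreal (L2 * \<epsilon> powr p) + ennreal (L3 * dist y2 z3 powr p)"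
          using L by (simp add: ennreal_plus[symmetric] del: ennreal_plus)
        finally show "g z \<le> h z"
          unfolding g_def h_def h1_def h3_def c_def x0_def y1_def y2_def z3_def by simp
      qed
    qed
  qed
  also have "\<dots> = (\<integral>\<^sup>+ z. h z \<partial>G)" by (rule intG[OF mh, symmetric])
  also have "\<dots> = (\<integral>\<^sup>+ z. h1 (fst z) \<partial>G) + (\<integral>\<^sup>+ z. c \<partial>G) + (\<integral>\<^sup>+ z. h3 (snd z) \<partial>G)"
  proof -
    have a1: "(\<lambda>z. h1 (fst z)) \<in> borel_measurable G" by (rule G_meas) (use mh1 in measurable)
    have a3: "(\<lambda>z. h3 (snd z)) \<in> borel_measurable G" by (rule G_meas) (use mh3 in measurable)
    have a2: "(\<lambda>z. h1 (fst z) + c) \<in> borel_measurable G"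
      using a1 by (rule borel_measurable_add) simp
    have "(\<integral>\<^sup>+ z. h z \<partial>G) = (\<integral>\<^sup>+ z. h1 (fst z) + c \<partial>G) + (\<integral>\<^sup>+ z. h3 (snd z) \<partial>G)"
      unfolding h_def by (rule nn_integral_add[OF a2 a3])
    also have "(\<integral>\<^sup>+ z. h1 (fst z) + c \<partial>G) = (\<integral>\<^sup>+ z. h1 (fst z) \<partial>G) + (\<integral>\<^sup>+ z. c \<partial>G)"
      by (rule nn_integral_add[OF a1]) simp
    finally show ?thesis .
  qed
  also have "(\<integral>\<^sup>+ z. h1 (fst z) \<partial>G) = (\<integral>\<^sup>+ z. h1 z \<partial>\<pi>1)" by (rule M1[OF mh1])
  also have "(\<integral>\<^sup>+ z. h3 (snd z) \<partial>G) = (\<integral>\<^sup>+ z. h3 z \<partial>\<pi>2)" by (rule M2[OF mh3])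
  also have "(\<integral>\<^sup>+ z. c \<partial>G) = c"
  proof -
    have "(\<integral>\<^sup>+ z. (\<lambda>_. c) (fst z) \<partial>G) = (\<integral>\<^sup>+ z. c \<partial>\<pi>1)" by (rule M1) simp
    also have "\<dots> = c" using prob_space.emeasure_space_1[OF prob1] by simp
    finally show ?thesis by simp
  qed
  finally show ?thesis unfolding h1_def h3_def c_def .
qed

end

lemma wcost_eq_wass:
  fixes \<mu> \<nu> :: "'a::polish_space measure"
  assumes \<mu>: "\<mu> \<in> Pp p UNIV dist" and \<nu>: "\<nu> \<in> Pp p UNIV dist" and p: "1 \<le> p"
  shows "wcost p UNIV dist \<mu> \<nu> = ennreal (wass p UNIV dist \<mu> \<nu> powr p)"
proof -
  have f: "wcost p UNIV dist \<mu> \<nu> < \<infinity>" by (rule wcost_fin[OF \<mu> \<nu> p])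
  have "wass p UNIV dist \<mu> \<nu> powr p = (enn2real (wcost p UNIV dist \<mu> \<nu>) powr (1 / p)) powr p"
    by (simp add: wass_Pp(2)[OF \<mu> \<nu> p])
  also have "\<dots> = enn2real (wcost p UNIV dist \<mu> \<nu>)" using p by (simp add: powr_powr)
  finally show ?thesis using f by simp
qed

lemma approx_coup:
  fixes \<mu> \<nu> :: "'a::polish_space measure"
  assumes \<mu>: "\<mu> \<in> Pp p UNIV dist" and \<nu>: "\<nu> \<in> Pp p UNIV dist" and p: "1 \<le> p" and e: "0 < \<eta>"
  obtains \<pi> where "\<pi> \<in> couplings UNIV dist \<mu> \<nu>"
    "enn2real (\<integral>\<^sup>+ z. ennreal (dist (fst z) (snd z) powr p) \<partial>\<pi>) powr (1 / p) < wass p UNIV dist \<mu> \<nu> + \<eta>"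
proof -
  define W where "W = wass p UNIV dist \<mu> \<nu>"
  have W0: "0 \<le> W" unfolding W_def by (rule wass_nonneg)
  have "W powr p < (W + \<eta>) powr p" using W0 e p by (intro powr_less_mono2) auto
  hence "wcost p UNIV dist \<mu> \<nu> < ennreal ((W + \<eta>) powr p)"
    unfolding wcost_eq_wass[OF \<mu> \<nu> p] W_def[symmetric] by (simp add: ennreal_less_iff)
  then obtain \<pi> where \<pi>: "\<pi> \<in> couplings UNIV dist \<mu> \<nu>"
    and lt: "(\<integral>\<^sup>+ z. ennreal (dist (fst z) (snd z) powr p) \<partial>\<pi>) < ennreal ((W + \<eta>) powr p)"
    unfolding wcost_def by (auto simp: INF_less_iff)
  define c where "c = enn2real (\<integral>\<^sup>+ z. ennreal (dist (fst z) (snd z) powr p) \<partial>\<pi>)"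
  have fin: "(\<integral>\<^sup>+ z. ennreal (dist (fst z) (snd z) powr p) \<partial>\<pi>) < \<infinity>" by (rule coup_cost_fin[OF \<pi> \<mu> \<nu> p])
  have c0: "0 \<le> c" unfolding c_def by simp
  have "ennreal c < ennreal ((W + \<eta>) powr p)" using lt fin unfolding c_def by simp
  hence "c < (W + \<eta>) powr p" using c0 by (subst (asm) ennreal_less_iff) auto
  hence "c powr (1 / p) < ((W + \<eta>) powr p) powr (1 / p)" using c0 p by (intro powr_less_mono2) auto
  also have "\<dots> = W + \<eta>" using p W0 e by (simp add: powr_powr)
  finally show ?thesis using \<pi> that unfolding c_def W_def by blast
qed

lemma wass_triangle:
  fixes \<mu> \<nu> \<rho> :: "'a::polish_space measure"
  assumes \<mu>: "\<mu> \<in> Pp p UNIV dist" and \<nu>: "\<nu> \<in> Pp p UNIV dist" and \<rho>: "\<rho> \<in> Pp p UNIV dist" and p: "1 \<le> p"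
  shows "wass p UNIV dist \<mu> \<rho> \<le> wass p UNIV dist \<mu> \<nu> + wass p UNIV dist \<nu> \<rho>"
proof (rule field_le_epsilon)
  fix e :: real assume e: "0 < e"
  define \<eta> where "\<eta> = e / 5"
  have \<eta>: "0 < \<eta>" using e unfolding \<eta>_def by simp
  obtain \<pi>1 where \<pi>1: "\<pi>1 \<in> couplings UNIV dist \<mu> \<nu>"
    and l1: "enn2real (\<integral>\<^sup>+ z. ennreal (dist (fst z) (snd z) powr p) \<partial>\<pi>1) powr (1 / p) < wass p UNIV dist \<mu> \<nu> + \<eta>"
    using approx_coup[OF \<mu> \<nu> p \<eta>] by blast
  obtain \<pi>2 where \<pi>2: "\<pi>2 \<in> couplings UNIV dist \<nu> \<rho>"
    and l2: "enn2real (\<integral>\<^sup>+ z. ennreal (dist (fst z) (snd z) powr p) \<partial>\<pi>2) powr (1 / p) < wass p UNIV dist \<nu> \<rho> + \<eta>"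
    using approx_coup[OF \<nu> \<rho> p \<eta>] by blast
  obtain B :: "nat \<Rightarrow> 'a set" where Bm: "\<And>k. B k \<in> sets borel" and Bd: "disjoint_family B"
    and Bu: "(\<Union>k. B k) = UNIV" and diam: "\<And>k y y'. y \<in> B k \<Longrightarrow> y' \<in> B k \<Longrightarrow> dist y y' \<le> \<eta>"
    using small_partition[OF \<eta>] by metis
  interpret glue \<mu> \<nu> \<rho> p \<pi>1 \<pi>2 B
    by unfold_locales (fact \<mu> \<nu> \<rho> p \<pi>1 \<pi>2 Bm Bd Bu)+
  define C1 where "C1 = (\<integral>\<^sup>+ z. ennreal (dist (fst z) (snd z) powr p) \<partial>\<pi>1)"
  define C2 where "C2 = (\<integral>\<^sup>+ z. ennreal (dist (fst z) (snd z) powr p) \<partial>\<pi>2)"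
  define c1 where "c1 = enn2real C1"
  define c2 where "c2 = enn2real C2"
  have C1: "C1 = ennreal c1" using coup_cost_fin[OF \<pi>1 \<mu> \<nu> p] unfolding c1_def C1_def by simp
  have C2: "C2 = ennreal c2" using coup_cost_fin[OF \<pi>2 \<nu> \<rho> p] unfolding c2_def C2_def by simp
  have c10: "0 \<le> c1" and c20: "0 \<le> c2" unfolding c1_def c2_def by simp_all
  define s1 where "s1 = c1 powr (1 / p) + \<eta>"
  define s3 where "s3 = c2 powr (1 / p) + \<eta>"
  define S where "S = s1 + \<eta> + s3"
  have s1: "0 < s1" unfolding s1_def using \<eta> powr_ge_zero[of c1 "1 / p"] by linarith
  have s3: "0 < s3" unfolding s3_def using \<eta> powr_ge_zero[of c2 "1 / p"] by linarith
  define L1 where "L1 = (s1 / S) powr (1 - p)"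
  define L2 where "L2 = (\<eta> / S) powr (1 - p)"
  define L3 where "L3 = (s3 / S) powr (1 - p)"
  have spl: "(a + b + c) powr p \<le> L1 * a powr p + L2 * b powr p + L3 * c powr p"
    if "0 \<le> a" "0 \<le> b" "0 \<le> c" for a b c
    unfolding L1_def L2_def L3_def S_def using split3[OF that s1 \<eta> s3 p] by simp
  have cost: "(\<integral>\<^sup>+ z. ennreal (dist (fst z) (snd z) powr p) \<partial>\<gamma>) \<le>
    (\<integral>\<^sup>+ z. ennreal (L1 * dist (fst z) (snd z) powr p) \<partial>\<pi>1) + ennreal (L2 * \<eta> powr p)
     + (\<integral>\<^sup>+ z. ennreal (L3 * dist (fst z) (snd z) powr p) \<partial>\<pi>2)"
    by (rule gamma_cost[OF diam]) (use \<eta> spl in \<open>auto simp: L1_def L2_def L3_def\<close>)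
  have i1: "(\<integral>\<^sup>+ z. ennreal (L1 * dist (fst z) (snd z) powr p) \<partial>\<pi>1) = ennreal (L1 * c1)"
  proof -
    have "(\<integral>\<^sup>+ z. ennreal (L1 * dist (fst z) (snd z) powr p) \<partial>\<pi>1) = (\<integral>\<^sup>+ z. ennreal L1 * ennreal (dist (fst z) (snd z) powr p) \<partial>\<pi>1)"
      by (rule nn_integral_cong) (simp add: L1_def ennreal_mult)
    also have "\<dots> = ennreal L1 * C1" unfolding C1_def
      by (rule nn_integral_cmult) (rule coup_meas[OF \<pi>1], measurable)
    finally show ?thesis unfolding C1 using c10 by (simp add: L1_def ennreal_mult)
  qed
  have i3: "(\<integral>\<^sup>+ z. ennreal (L3 * dist (fst z) (snd z) powr p) \<partial>\<pi>2) = ennreal (L3 * c2)"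
  proof -
    have "(\<integral>\<^sup>+ z. ennreal (L3 * dist (fst z) (snd z) powr p) \<partial>\<pi>2) = (\<integral>\<^sup>+ z. ennreal L3 * ennreal (dist (fst z) (snd z) powr p) \<partial>\<pi>2)"
      by (rule nn_integral_cong) (simp add: L3_def ennreal_mult)
    also have "\<dots> = ennreal L3 * C2" unfolding C2_def
      by (rule nn_integral_cmult) (rule coup_meas[OF \<pi>2], measurable)
    finally show ?thesis unfolding C2 using c20 by (simp add: L3_def ennreal_mult)
  qed
  have "wcost p UNIV dist \<mu> \<rho> \<le> (\<integral>\<^sup>+ z. ennreal (dist (fst z) (snd z) powr p) \<partial>\<gamma>)"
    unfolding wcost_def by (rule INF_lower) (rule gamma_coup)
  also have "\<dots> \<le> ennreal (L1 * c1 + L2 * \<eta> powr p + L3 * c2)"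
    using cost unfolding i1 i3 using c10 c20 by (simp add: L1_def L2_def L3_def ennreal_plus[symmetric] del: ennreal_plus)
  also have "\<dots> \<le> ennreal (S powr p)"
    using split3_final[OF c10 c20 \<eta> p] unfolding L1_def L2_def L3_def S_def s1_def s3_def
    by (intro ennreal_leI) simp
  finally have wle: "wcost p UNIV dist \<mu> \<rho> \<le> ennreal (S powr p)" .
  have "wass p UNIV dist \<mu> \<rho> = enn2real (wcost p UNIV dist \<mu> \<rho>) powr (1 / p)"
    by (rule wass_Pp(2)[OF \<mu> \<rho> p])
  also have "\<dots> \<le> enn2real (ennreal (S powr p)) powr (1 / p)"
    using wle p by (intro powr_mono2 enn2real_mono) auto
  also have "\<dots> = S"
    using p s1 s3 \<eta> unfolding S_def by (simp add: powr_powr)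
  also have "S < wass p UNIV dist \<mu> \<nu> + wass p UNIV dist \<nu> \<rho> + 5 * \<eta>"
    using l1 l2 unfolding S_def s1_def s3_def C1_def[symmetric] C2_def[symmetric] c1_def[symmetric] c2_def[symmetric]
    by linarith
  finally show "wass p UNIV dist \<mu> \<rho> \<le> wass p UNIV dist \<mu> \<nu> + wass p UNIV dist \<nu> \<rho> + e"
    unfolding \<eta>_def by simp
qed

lemma metric_Pp:
  assumes p: "1 \<le> p"
  shows "Metric_space (Pp p UNIV dist) (wass p UNIV (dist :: 'a::polish_space \<Rightarrow> 'a \<Rightarrow> real))"
proof
  show "0 \<le> wass p UNIV dist x y" for x y :: "'a measure" by (rule wass_nonneg)
  show "wass p UNIV dist x y = wass p UNIV dist y x" for x y :: "'a measure" by (rule wass_sym)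
  show "x \<in> Pp p UNIV dist \<Longrightarrow> y \<in> Pp p UNIV dist \<Longrightarrow> wass p UNIV dist x y = 0 \<longleftrightarrow> x = y" for x y :: "'a measure"
    using wass_pos p by blast
  show "x \<in> Pp p UNIV dist \<Longrightarrow> y \<in> Pp p UNIV dist \<Longrightarrow> z \<in> Pp p UNIV dist \<Longrightarrow>
      wass p UNIV dist x z \<le> wass p UNIV dist x y + wass p UNIV dist y z" for x y z :: "'a measure"
    using wass_triangle p by blast
qed

lemma (in Metric_space) wcost_return:
  assumes a: "a \<in> M" and b: "b \<in> M"
  shows "wcost p M d (return (mborel M d) a) (return (mborel M d) b) = ennreal (d a b powr p)"
proof -
  define S where "S = mborel M d"
  have sa: "{a} \<in> sets S" "{b} \<in> sets S" unfolding S_def using a b by (simp_all add: singleton_mborel)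
  have spS: "space S = M" unfolding S_def by (rule space_mborel)
  have Ma: "M - {a} \<in> sets S" "M - {b} \<in> sets S"
    using sets.Diff[OF sets.top sa(1)] sets.Diff[OF sets.top sa(2)] by (simp_all add: spS)
  have key: "(\<integral>\<^sup>+ z. ennreal (d (fst z) (snd z) powr p) \<partial>\<pi>) = ennreal (d a b powr p)"
    if \<pi>: "\<pi> \<in> couplings M d (return S a) (return S b)" for \<pi>
  proof -
    have s: "sets \<pi> = sets (S \<Otimes>\<^sub>M S)" and d1: "distr \<pi> S fst = return S a"
      and d2: "distr \<pi> S snd = return S b"
      using \<pi> unfolding couplings_def S_def by auto
    have sp: "space \<pi> = M \<times> M"
      using sets_eq_imp_space_eq[OF s] by (simp add: space_pair_measure spS)
    have fm: "fst \<in> measurable \<pi> S" by (subst measurable_cong_sets[OF s refl]) simp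
    have sm: "snd \<in> measurable \<pi> S" by (subst measurable_cong_sets[OF s refl]) simp
    have n1: "emeasure \<pi> ((M - {a}) \<times> M) = 0"
    proof -
      have "emeasure (distr \<pi> S fst) (M - {a}) = emeasure \<pi> (fst -` (M - {a}) \<inter> space \<pi>)"
        by (rule emeasure_distr[OF fm Ma(1)])
      also have "fst -` (M - {a}) \<inter> space \<pi> = (M - {a}) \<times> M" using sp by auto
      finally show ?thesis using Ma(1) by (simp add: d1)
    qed
    have n2: "emeasure \<pi> (M \<times> (M - {b})) = 0"
    proof -
      have "emeasure (distr \<pi> S snd) (M - {b}) = emeasure \<pi> (snd -` (M - {b}) \<inter> space \<pi>)"
        by (rule emeasure_distr[OF sm Ma(2)])
      also have "snd -` (M - {b}) \<inter> space \<pi> = M \<times> (M - {b})" using sp by auto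
      finally show ?thesis using Ma(2) by (simp add: d2)
    qed
    have r1: "(M - {a}) \<times> M \<in> sets \<pi>" unfolding s using Ma(1) sets.top[of S] spS by (intro pair_measureI) auto
    have r2: "M \<times> (M - {b}) \<in> sets \<pi>" unfolding s using Ma(2) sets.top[of S] spS by (intro pair_measureI) auto
    have nul: "(M - {a}) \<times> M \<union> M \<times> (M - {b}) \<in> null_sets \<pi>"
      using n1 n2 r1 r2 by (intro null_sets.Un) (simp_all add: null_sets_def)
    have ae: "AE z in \<pi>. z = (a, b)"
      by (rule AE_I'[OF nul]) (auto simp: sp)
    have "(\<integral>\<^sup>+ z. ennreal (d (fst z) (snd z) powr p) \<partial>\<pi>) = (\<integral>\<^sup>+ z. ennreal (d a b powr p) \<partial>\<pi>)"
      by (rule nn_integral_cong_AE) (use ae in \<open>auto elim: AE_mp intro: AE_I2\<close>)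
    also have "\<dots> = ennreal (d a b powr p) * emeasure \<pi> (space \<pi>)" by simp
    also have "emeasure \<pi> (space \<pi>) = 1"
    proof -
      have MS: "M \<in> sets S" using sets.top[of S] spS by simp
      have e: "emeasure (distr \<pi> S fst) M = emeasure \<pi> (fst -` M \<inter> space \<pi>)"
        by (rule emeasure_distr[OF fm MS])
      have "fst -` M \<inter> space \<pi> = space \<pi>" using sp by auto
      with e have "emeasure \<pi> (space \<pi>) = emeasure (return S a) M" by (simp add: d1)
      also have "\<dots> = 1" using a MS by simp
      finally show ?thesis .
    qed
    finally show ?thesis by simp
  qed
  have c0: "return (S \<Otimes>\<^sub>M S) (a, b) \<in> couplings M d (return S a) (return S b)"
  proof -
    have sp2: "(a, b) \<in> space (S \<Otimes>\<^sub>M S)" using a b by (simp add: space_pair_measure spS)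
    have "distr (return (S \<Otimes>\<^sub>M S) (a, b)) S fst = return S a"
      using distr_return[OF measurable_fst sp2] by simp
    moreover have "distr (return (S \<Otimes>\<^sub>M S) (a, b)) S snd = return S b"
      using distr_return[OF measurable_snd sp2] by simp
    ultimately show ?thesis unfolding couplings_def S_def by simp
  qed
  show ?thesis unfolding S_def[symmetric] wcost_def
  proof (rule antisym)
    show "(INF \<pi>\<in>couplings M d (return S a) (return S b). \<integral>\<^sup>+ z. ennreal (d (fst z) (snd z) powr p) \<partial>\<pi>) \<le> ennreal (d a b powr p)"
      using key[OF c0] by (intro INF_lower2[OF c0]) simp
    show "ennreal (d a b powr p) \<le> (INF \<pi>\<in>couplings M d (return S a) (return S b). \<integral>\<^sup>+ z. ennreal (d (fst z) (snd z) powr p) \<partial>\<pi>)"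
      using key by (intro INF_greatest) simp
  qed
qed

lemma (in Metric_space) wass_e_return:
  assumes a: "a \<in> M" and b: "b \<in> M" and p: "0 < p"
  shows "wass_e p M d (return (mborel M d) a) (return (mborel M d) b) = ereal (d a b)"
  unfolding wass_e_def wcost_return[OF a b] using p by (simp add: powr_powr)

lemma Met_UNIV: "Metric_space UNIV (dist :: 'a::metric_space \<Rightarrow> 'a \<Rightarrow> real)"
  by (simp add: dist_commute dist_triangle Metric_space.intro)

lemma single_type_eq:
  fixes \<mu> \<nu> :: "'a::polish_space measure"
  assumes all: "\<And>x y::'a. x = y" and \<mu>: "\<mu> \<in> Pp p UNIV dist" and \<nu>: "\<nu> \<in> Pp p UNIV dist"
  shows "\<mu> = \<nu>"
proof (rule measure_eqI)
  interpret M: prob_space \<mu> by (rule Pp_D(1)[OF \<mu>])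
  interpret N: prob_space \<nu> by (rule Pp_D(1)[OF \<nu>])
  show "sets \<mu> = sets \<nu>" using Pp_D(2)[OF \<mu>] Pp_D(2)[OF \<nu>] by simp
  fix A assume "A \<in> sets \<mu>"
  have "A = {} \<or> A = UNIV"
  proof (cases "A = {}")
    case False
    then obtain a where a: "a \<in> A" by blast
    have "x \<in> A" for x using a all[of x a] by simp
    then show ?thesis by blast
  qed simp
  then show "emeasure \<mu> A = emeasure \<nu> A"
    using M.emeasure_space_1 N.emeasure_space_1 Pp_D(3)[OF \<mu>] Pp_D(3)[OF \<nu>] by auto
qed

lemma return_Pp:
  fixes x :: "'a::polish_space"
  shows "return borel x \<in> Pp p UNIV dist"
proof -
  have "(\<integral>\<^sup>+ y. ennreal (dist x y powr p) \<partial>return borel x) = ennreal (dist x x powr p)"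
    by (rule nn_integral_return) simp_all
  then have "(\<integral>\<^sup>+ y. ennreal (dist x y powr p) \<partial>return borel x) < \<infinity>" by simp
  then show ?thesis unfolding Pp_def mborel_UNIV by (auto intro: prob_space_return)
qed

lemma wass_return_X:
  fixes x y :: "'a::polish_space"
  assumes p: "0 < p"
  shows "wass p UNIV dist (return borel x) (return borel y) = dist x y"
  using Metric_space.wass_e_return[OF Met_UNIV, of x y p] p unfolding wass_def mborel_UNIV by simp

context
  fixes p :: real and m :: "'a::polish_space \<Rightarrow> 'a measure"
  assumes p: "1 \<le> p"
    and walk: "\<And>x. m x \<in> Pp p UNIV dist"
    and meas: "m \<in> measurable borel (mborel (Pp p UNIV dist) (wass p UNIV dist))"
begin

abbreviation "PP \<equiv> Pp p UNIV (dist :: 'a \<Rightarrow> 'a \<Rightarrow> real)"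
abbreviation "WW \<equiv> wass p UNIV (dist :: 'a \<Rightarrow> 'a \<Rightarrow> real)"
abbreviation "NN \<equiv> mborel PP WW"

lemma MP: "Metric_space PP WW" by (rule metric_Pp[OF p])

lemma lift_ok:
  assumes \<mu>: "\<mu> \<in> PP"
  shows "prob_space (lift_walk p m \<mu>) \<and> sets (lift_walk p m \<mu>) = sets NN"
proof
  interpret prob_space \<mu> by (rule Pp_D(1)[OF \<mu>])
  have m\<mu>: "m \<in> measurable \<mu> NN" by (subst measurable_cong_sets[OF Pp_D(2)[OF \<mu>] refl]) (rule meas)
  show "prob_space (lift_walk p m \<mu>)" unfolding lift_walk_def by (rule prob_space_distr[OF m\<mu>])
  show "sets (lift_walk p m \<mu>) = sets NN" unfolding lift_walk_def by simp
qed

lemma kappa_X: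
  assumes "x \<noteq> y"
  shows "kappa p UNIV dist m x y = ereal (1 - WW (m x) (m y) / dist x y)"
  using assms unfolding kappa_def wass_Pp(1)[OF walk walk p] by (simp add: one_ereal_def)

lemma kappa_dirac:
  assumes xy: "x \<noteq> y"
  shows "kappa p PP WW (lift_walk p m) (return borel x) (return borel y) = kappa p UNIV dist m x y"
proof -
  have l: "lift_walk p m (return borel z) = return NN (m z)" for z
    unfolding lift_walk_def by (rule distr_return[OF meas]) simp
  have "wass_e p PP WW (return NN (m x)) (return NN (m y)) = ereal (WW (m x) (m y))"
    by (rule Metric_space.wass_e_return[OF MP walk walk]) (use p in simp)
  moreover have "WW (return borel x) (return borel y) = dist x y" using p by (simp add: wass_return_X)
  ultimately show ?thesis unfolding kappa_def l using wass_Pp(1)[OF walk walk p] by simp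
qed

lemma core1:
  assumes K: "0 \<le> K" and Kb: "\<And>x y. WW (m x) (m y) \<le> K * dist x y"
    and \<mu>: "\<mu> \<in> PP" and \<nu>: "\<nu> \<in> PP"
  shows "wass_e p PP WW (lift_walk p m \<mu>) (lift_walk p m \<nu>) \<le> ereal (K * WW \<mu> \<nu>)"
proof -
  define W where "W = WW \<mu> \<nu>"
  have W0: "0 \<le> W" unfolding W_def by (rule wass_nonneg)
  define wt where "wt = wcost p PP WW (lift_walk p m \<mu>) (lift_walk p m \<nu>)"
  have step: "wt \<le> ennreal (K powr p) * (\<integral>\<^sup>+ z. ennreal (dist (fst z) (snd z) powr p) \<partial>\<pi>)"
    if \<pi>: "\<pi> \<in> couplings UNIV dist \<mu> \<nu>" for \<pi>
  proof -
    define T where "T z = (m (fst z), m (snd z))" for z :: "'a \<times> 'a"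
    have fm: "fst \<in> measurable \<pi> borel" "snd \<in> measurable \<pi> borel"
      by (rule coup_meas[OF \<pi>], simp)+
    have Tm: "T \<in> measurable \<pi> (NN \<Otimes>\<^sub>M NN)"
      unfolding T_def by (intro measurable_Pair measurable_compose[OF fm(1) meas] measurable_compose[OF fm(2) meas])
    define \<pi>' where "\<pi>' = distr \<pi> (NN \<Otimes>\<^sub>M NN) T"
    have "distr \<pi>' NN fst = distr \<pi> NN (fst \<circ> T)" unfolding \<pi>'_def by (rule distr_distr[OF _ Tm]) simp
    also have "fst \<circ> T = m \<circ> fst" unfolding T_def by auto
    also have "distr \<pi> NN (m \<circ> fst) = distr (distr \<pi> borel fst) NN m" by (rule distr_distr[OF meas fm(1), symmetric])
    also have "\<dots> = lift_walk p m \<mu>" unfolding lift_walk_def coupD(4)[OF \<pi>] ..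
    finally have d1: "distr \<pi>' NN fst = lift_walk p m \<mu>" .
    have "distr \<pi>' NN snd = distr \<pi> NN (snd \<circ> T)" unfolding \<pi>'_def by (rule distr_distr[OF _ Tm]) simp
    also have "snd \<circ> T = m \<circ> snd" unfolding T_def by auto
    also have "distr \<pi> NN (m \<circ> snd) = distr (distr \<pi> borel snd) NN m" by (rule distr_distr[OF meas fm(2), symmetric])
    also have "\<dots> = lift_walk p m \<nu>" unfolding lift_walk_def coupD(5)[OF \<pi>] ..
    finally have d2: "distr \<pi>' NN snd = lift_walk p m \<nu>" .
    have c: "\<pi>' \<in> couplings PP WW (lift_walk p m \<mu>) (lift_walk p m \<nu>)"
      unfolding couplings_def using d1 d2 by (simp add: \<pi>'_def)
    have "wt \<le> (\<integral>\<^sup>+ z. ennreal (WW (fst z) (snd z) powr p) \<partial>\<pi>')"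
      unfolding wt_def wcost_def by (rule INF_lower[OF c])
    also have "\<dots> \<le> (\<integral>\<^sup>+ z. ennreal (WW (fst (T z)) (snd (T z)) powr p) \<partial>\<pi>)"
      unfolding \<pi>'_def by (rule nn_integral_distr_le[OF Tm])
    also have "\<dots> \<le> (\<integral>\<^sup>+ z. ennreal (K powr p) * ennreal (dist (fst z) (snd z) powr p) \<partial>\<pi>)"
    proof (rule nn_integral_mono)
      fix z :: "'a \<times> 'a"
      have "WW (m (fst z)) (m (snd z)) powr p \<le> (K * dist (fst z) (snd z)) powr p"
        using p Kb[of "fst z" "snd z"] wass_nonneg by (intro powr_mono2) auto
      also have "\<dots> = K powr p * dist (fst z) (snd z) powr p" using K by (simp add: powr_mult)
      finally show "ennreal (WW (fst (T z)) (snd (T z)) powr p) \<le> ennreal (K powr p) * ennreal (dist (fst z) (snd z) powr p)"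
        unfolding T_def by (simp add: ennreal_mult[symmetric] ennreal_leI)
    qed
    also have "\<dots> = ennreal (K powr p) * (\<integral>\<^sup>+ z. ennreal (dist (fst z) (snd z) powr p) \<partial>\<pi>)"
      by (rule nn_integral_cmult) (rule coup_meas[OF \<pi>], measurable)
    finally show ?thesis .
  qed
  have wc: "wcost p UNIV dist \<mu> \<nu> = ennreal (W powr p)" unfolding W_def by (rule wcost_eq_wass[OF \<mu> \<nu> p])
  have bnd: "wt \<le> ennreal (K powr p * (W powr p + e))" if e: "0 < e" for e
  proof -
    have "wcost p UNIV dist \<mu> \<nu> < ennreal (W powr p + e)" unfolding wc using e by (simp add: ennreal_less_iff)
    then obtain \<pi> where \<pi>: "\<pi> \<in> couplings UNIV dist \<mu> \<nu>"
      and lt: "(\<integral>\<^sup>+ z. ennreal (dist (fst z) (snd z) powr p) \<partial>\<pi>) < ennreal (W powr p + e)"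
      unfolding wcost_def by (auto simp: INF_less_iff)
    have "wt \<le> ennreal (K powr p) * (\<integral>\<^sup>+ z. ennreal (dist (fst z) (snd z) powr p) \<partial>\<pi>)" by (rule step[OF \<pi>])
    also have "\<dots> \<le> ennreal (K powr p) * ennreal (W powr p + e)" using lt by (intro mult_left_mono) auto
    also have "\<dots> = ennreal (K powr p * (W powr p + e))" using e by (simp add: ennreal_mult)
    finally show ?thesis .
  qed
  have fin: "wt < \<infinity>" using bnd[of 1] by (simp add: le_less_trans)
  define t where "t = enn2real wt"
  have t0: "0 \<le> t" unfolding t_def by simp
  have wt_eq: "wt = ennreal t" unfolding t_def using fin by simp
  have tle: "t \<le> K powr p * W powr p"
  proof (rule field_le_epsilon)
    fix e :: real assume e: "0 < e"
    define e' where "e' = e / (K powr p + 1)"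
    have e': "0 < e'" unfolding e'_def using e by (simp add: add_nonneg_pos)
    have "ennreal t \<le> ennreal (K powr p * (W powr p + e'))" using bnd[OF e'] wt_eq by simp
    hence "t \<le> K powr p * (W powr p + e')" using e' by (subst (asm) ennreal_le_iff) (auto intro: add_nonneg_pos)
    also have "K powr p * e' \<le> e"
    proof -
      have kk: "K powr p * e' = e * (K powr p / (K powr p + 1))" unfolding e'_def by simp
      have c: "0 < K powr p + 1" using powr_ge_zero[of K p] by linarith
      have "K powr p / (K powr p + 1) \<le> 1" using c by (simp add: pos_divide_le_eq)
      then have "e * (K powr p / (K powr p + 1)) \<le> e * 1" using e by (intro mult_left_mono) auto
      then show ?thesis unfolding kk by simp
    qed
    hence "K powr p * (W powr p + e') \<le> K powr p * W powr p + e" by (simp add: algebra_simps)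
    finally show "t \<le> K powr p * W powr p + e" .
  qed
  have "wass_e p PP WW (lift_walk p m \<mu>) (lift_walk p m \<nu>) = ereal (t powr (1 / p))"
    unfolding wass_e_def wt_def[symmetric] using fin by (simp add: t_def)
  also have "t powr (1 / p) \<le> (K powr p * W powr p) powr (1 / p)" using tle t0 p by (intro powr_mono2) auto
  also have "(K powr p * W powr p) powr (1 / p) = K * W"
    using K W0 p by (simp add: powr_mult[symmetric] powr_powr)
  finally show ?thesis unfolding W_def by simp
qed

end

theorem theorem1p2:
  fixes p :: real and m :: "'a::polish_space \<Rightarrow> 'a measure"
  assumes p: "1 \<le> p"
    and walk: "\<And>x. m x \<in> Pp p UNIV dist"
    and meas: "m \<in> measurable borel (mborel (Pp p UNIV dist) (wass p UNIV dist))"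
  shows "(\<forall>\<mu>\<in>Pp p UNIV dist.
            prob_space (lift_walk p m \<mu>) \<and>
            sets (lift_walk p m \<mu>) = sets (mborel (Pp p UNIV dist) (wass p UNIV dist)))
      \<and> (INF xy\<in>{(x, y). x \<noteq> y}. kappa p UNIV dist m (fst xy) (snd xy))
        = (INF \<mu>\<nu>\<in>{(\<mu>, \<nu>). \<mu> \<in> Pp p UNIV dist \<and> \<nu> \<in> Pp p UNIV dist \<and> \<mu> \<noteq> \<nu>}.
             kappa p (Pp p UNIV dist) (wass p UNIV dist) (lift_walk p m) (fst \<mu>\<nu>) (snd \<mu>\<nu>))"
proof
  show "\<forall>\<mu>\<in>Pp p UNIV dist. prob_space (lift_walk p m \<mu>) \<and>
            sets (lift_walk p m \<mu>) = sets (mborel (Pp p UNIV dist) (wass p UNIV dist))"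
    using lift_ok[OF p walk meas] by blast
  define L where "L = (INF xy\<in>{(x, y). x \<noteq> y}. kappa p UNIV dist m (fst xy) (snd xy))"
  define R where "R = (INF \<mu>\<nu>\<in>{(\<mu>, \<nu>). \<mu> \<in> Pp p UNIV dist \<and> \<nu> \<in> Pp p UNIV dist \<and> \<mu> \<noteq> \<nu>}.
             kappa p (Pp p UNIV dist) (wass p UNIV dist) (lift_walk p m) (fst \<mu>\<nu>) (snd \<mu>\<nu>))"
  have RL: "R \<le> L" unfolding L_def
  proof (rule INF_greatest)
    fix xy :: "'a \<times> 'a" assume xy: "xy \<in> {(x, y). x \<noteq> y}"
    obtain x y where xy': "xy = (x, y)" by (cases xy)
    with xy have ne: "x \<noteq> y" by simp
    have "return borel x \<noteq> return borel y"
    proof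
      assume "return borel x = return borel y"
      then have "emeasure (return borel x) {x} = emeasure (return borel y) {x}" by simp
      then show False using ne by (simp add: indicator_def)
    qed
    then have mem: "(return borel x, return borel y) \<in> {(\<mu>, \<nu>). \<mu> \<in> Pp p UNIV dist \<and> \<nu> \<in> Pp p UNIV dist \<and> \<mu> \<noteq> \<nu>}"
      by (simp add: return_Pp)
    have "R \<le> kappa p (Pp p UNIV dist) (wass p UNIV dist) (lift_walk p m) (return borel x) (return borel y)"
      unfolding R_def by (rule INF_lower2[OF mem]) simp
    also have "\<dots> = kappa p UNIV dist m x y" by (rule kappa_dirac[OF p walk meas ne])
    finally show "R \<le> kappa p UNIV dist m (fst xy) (snd xy)" by (simp add: xy')
  qed
  have LR: "L \<le> R" unfolding R_def
  proof (rule INF_greatest)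
    fix \<mu>\<nu> :: "'a measure \<times> 'a measure" assume h: "\<mu>\<nu> \<in> {(\<mu>, \<nu>). \<mu> \<in> Pp p UNIV dist \<and> \<nu> \<in> Pp p UNIV dist \<and> \<mu> \<noteq> \<nu>}"
    obtain \<mu> \<nu> :: "'a measure" where e: "\<mu>\<nu> = (\<mu>, \<nu>)" by (cases \<mu>\<nu>)
    with h have \<mu>: "\<mu> \<in> Pp p UNIV dist" and \<nu>: "\<nu> \<in> Pp p UNIV dist" and ne: "\<mu> \<noteq> \<nu>" by auto
    have "L \<le> kappa p (Pp p UNIV dist) (wass p UNIV dist) (lift_walk p m) \<mu> \<nu>"
    proof (cases "\<forall>x y::'a. x = y")
      case True
      then have "\<mu> = \<nu>" using single_type_eq[OF _ \<mu> \<nu>] by blast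
      with ne show ?thesis by simp
    next
      case False
      then obtain x0 y0 :: 'a where xy0: "x0 \<noteq> y0" by blast
      have Lle: "L \<le> ereal (1 - wass p UNIV dist (m x) (m y) / dist x y)" if "x \<noteq> y" for x y
      proof -
        have "L \<le> kappa p UNIV dist m (fst (x, y)) (snd (x, y))"
          unfolding L_def by (rule INF_lower) (simp add: that)
        then show ?thesis using kappa_X[OF p walk meas that] by simp
      qed
      show ?thesis
      proof (cases "L = -\<infinity>")
        case True then show ?thesis by simp
      next
        case Lninf: False
        have "L \<noteq> \<infinity>" using Lle[OF xy0] by auto
        then obtain l where Ll: "L = ereal l" using Lninf by (cases L) auto
        have l1: "l \<le> 1"
        proof -
          have "l \<le> 1 - wass p UNIV dist (m x0) (m y0) / dist x0 y0" using Lle[OF xy0] Ll by simp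
          moreover have "0 \<le> wass p UNIV dist (m x0) (m y0) / dist x0 y0" by (simp add: wass_nonneg)
          ultimately show ?thesis by linarith
        qed
        define K where "K = 1 - l"
        have K0: "0 \<le> K" unfolding K_def using l1 by simp
        have Kb: "wass p UNIV dist (m x) (m y) \<le> K * dist x y" for x y
        proof (cases "x = y")
          case True
          then show ?thesis using wass_self[OF walk[of x]] by simp
        next
          case False
          have d: "0 < dist x y" using False by simp
          have "l \<le> 1 - wass p UNIV dist (m x) (m y) / dist x y" using Lle[OF False] Ll by simp
          then have "wass p UNIV dist (m x) (m y) / dist x y \<le> K" unfolding K_def by linarith
          then show ?thesis using d by (simp add: pos_divide_le_eq)
        qed
        have core: "wass_e p (Pp p UNIV dist) (wass p UNIV dist) (lift_walk p m \<mu>) (lift_walk p m \<nu>)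
            \<le> ereal (K * wass p UNIV dist \<mu> \<nu>)"
          by (rule core1[OF p walk meas K0 Kb \<mu> \<nu>])
        define W where "W = wass p UNIV dist \<mu> \<nu>"
        have W0: "0 < W"
        proof -
          have "W \<noteq> 0" unfolding W_def using wass_pos[OF \<mu> \<nu> p] ne by simp
          moreover have "0 \<le> W" unfolding W_def by (rule wass_nonneg)
          ultimately show ?thesis by simp
        qed
        obtain t where t: "wass_e p (Pp p UNIV dist) (wass p UNIV dist) (lift_walk p m \<mu>) (lift_walk p m \<nu>) = ereal t"
          and t0: "0 \<le> t" and tK: "t \<le> K * W"
        proof -
          have a: "0 \<le> wass_e p (Pp p UNIV dist) (wass p UNIV dist) (lift_walk p m \<mu>) (lift_walk p m \<nu>)"
            by (rule wass_e_nonneg)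
          show ?thesis using a core that unfolding W_def
            by (cases "wass_e p (Pp p UNIV dist) (wass p UNIV dist) (lift_walk p m \<mu>) (lift_walk p m \<nu>)") auto
        qed
        have "t / W \<le> K" using tK W0 by (simp add: pos_divide_le_eq)
        then have "l \<le> 1 - t / W" unfolding K_def by linarith
        then have "L \<le> ereal (1 - t / W)" using Ll by simp
        also have "ereal (1 - t / W) = kappa p (Pp p UNIV dist) (wass p UNIV dist) (lift_walk p m) \<mu> \<nu>"
          unfolding kappa_def t W_def[symmetric] using W0 by (simp add: one_ereal_def)
        finally show ?thesis .
      qed
    qed
    then show "L \<le> kappa p (Pp p UNIV dist) (wass p UNIV dist) (lift_walk p m) (fst \<mu>\<nu>) (snd \<mu>\<nu>)"
      by (simp add: e)
  qed
  show "L = R" using RL LR by simp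
qed

end
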